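(* Let $(R,\mathfrak{m})$ be a Noetherian local ring and $I$ an $R$-ideal of analytic spread $\ell$. Let $s\ge 0$ be an integer, let $f_1,\ldots,f_{\ell+s}$ be elements of $I$, and set $\mathfrak{a}=(f_1,\ldots,f_{\ell-1})$ and $K=(f_1,\ldots,f_{\ell+s})$. Let $\varphi:\mathcal{F}(K)\to\mathcal{F}(I)$ be the natural map of special fiber rings. Then \[I^n=(f_1,\ldots,f_{\ell-1})I^{n-1}+(f_\ell,\ldots,f_{\ell+s})^n\quad\text{for all } n\gg0\] if and only if $\operatorname{coker}(\varphi)$ is a finite $\mathcal{F}(\mathfrak{a})$-module.
   Context: For an ideal $L$ of the local ring $(R,\mathfrak{m})$, $\mathcal{F}(L)=\bigoplus_{m\ge0}L^m/\mathfrak{m}L^m$ is the special fiber ring and $\ell(L)=\dim\mathcal{F}(L)$ is the analytic spread. The natural maps $\mathcal{F}(K)\to\mathcal{F}(I)$ and $\mathcal{F}(\mathfrak{a})\to\mathcal{F}(I)$ are induced by the inclusions $K\subset I$, $\mathfrak{a}\subset I$; $\operatorname{coker}(\varphi)$ is an $\mathcal{F}(\mathfrak{a})$-module via the latter. *)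

theory Defs
  imports "HOL-Algebra.Ideal_Product" "HOL-Algebra.Ring_Divisibility" "HOL-Library.Extended_Nat"
begin

definition ideal_pow :: "('a, 'b) ring_scheme \<Rightarrow> 'a set \<Rightarrow> nat \<Rightarrow> 'a set" where
  "ideal_pow R I n = I [^]\<^bsub>ideals_set R\<^esub> n"

definition local_ring :: "('a, 'b) ring_scheme \<Rightarrow> 'a set \<Rightarrow> bool" where
  "local_ring R m \<longleftrightarrow> cring R \<and> maximalideal m R \<and> (\<forall>M. maximalideal M R \<longrightarrow> M = m)"

definition fib_den :: "('a, 'b) ring_scheme \<Rightarrow> 'a set \<Rightarrow> 'a set \<Rightarrow> nat \<Rightarrow> 'a set" where
  "fib_den R m L n = m \<cdot>\<^bsub>R\<^esub> ideal_pow R L n"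

definition rep :: "'a set \<Rightarrow> 'a" where
  "rep S = (SOME a. a \<in> S)"

text \<open>The special fiber ring F(L) = direct sum over n of L^n / m L^n.
  An element is a function assigning to each degree n a coset (m L^n) + a with a in L^n,
  with only finitely many nonzero components.\<close>
definition special_fiber :: "('a, 'b) ring_scheme \<Rightarrow> 'a set \<Rightarrow> 'a set \<Rightarrow> (nat \<Rightarrow> 'a set) ring" where
  "special_fiber R m L =
    ring.make
      \<comment> \<open>carrier\<close>
      {x. (\<forall>n. \<exists>a \<in> ideal_pow R L n. x n = fib_den R m L n +>\<^bsub>R\<^esub> a)
          \<and> finite {n. x n \<noteq> fib_den R m L n}}
      \<comment> \<open>multiplication\<close>
      (\<lambda>x y n. fib_den R m L n +>\<^bsub>R\<^esub>
                 (\<Oplus>\<^bsub>R\<^esub>i\<in>{..n}. rep (x i) \<otimes>\<^bsub>R\<^esub> rep (y (n - i))))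
      \<comment> \<open>one\<close>
      (\<lambda>n. if n = 0 then fib_den R m L 0 +>\<^bsub>R\<^esub> \<one>\<^bsub>R\<^esub> else fib_den R m L n)
      \<comment> \<open>zero\<close>
      (\<lambda>n. fib_den R m L n)
      \<comment> \<open>addition\<close>
      (\<lambda>x y n. x n <+>\<^bsub>R\<^esub> y n)"

definition krull_dim :: "('c, 'd) ring_scheme \<Rightarrow> enat" where
  "krull_dim S = Sup {enat n | n. \<exists>P. (\<forall>i\<le>n. primeideal (P i) S) \<and> (\<forall>i<n. P i \<subset> P (Suc i))}"

definition analytic_spread :: "('a, 'b) ring_scheme \<Rightarrow> 'a set \<Rightarrow> 'a set \<Rightarrow> enat" where
  "analytic_spread R m L = krull_dim (special_fiber R m L)"

definition fib_map :: "('a, 'b) ring_scheme \<Rightarrow> 'a set \<Rightarrow> 'a set \<Rightarrow> 'a set \<Rightarrow> (nat \<Rightarrow> 'a set) \<Rightarrow> (nat \<Rightarrow> 'a set)" where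
  "fib_map R m J L x = (\<lambda>n. fib_den R m L n +>\<^bsub>R\<^esub> rep (x n))"

text \<open>coker(F(K) \<rightarrow> F(I)) is a finite F(a)-module (module structure via F(a) \<rightarrow> F(I)):
  there are finitely many elements g of F(I) whose classes generate the cokernel,
  i.e. every z in F(I) is  phi(y) + sum_g psi(c_g) g  with y in F(K) and c_g in F(a).\<close>
definition coker_finite_over :: "('a, 'b) ring_scheme \<Rightarrow> 'a set \<Rightarrow> 'a set \<Rightarrow> 'a set \<Rightarrow> 'a set \<Rightarrow> bool" where
  "coker_finite_over R m A K I \<longleftrightarrow>
    (let FI = special_fiber R m I in
     \<exists>G. finite G \<and> G \<subseteq> carrier FI \<and>
       (\<forall>z \<in> carrier FI. \<exists>y \<in> carrier (special_fiber R m K).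
          \<exists>c \<in> G \<rightarrow> carrier (special_fiber R m A).
            z = fib_map R m K I y \<oplus>\<^bsub>FI\<^esub>
                (\<Oplus>\<^bsub>FI\<^esub>g\<in>G. fib_map R m A I (c g) \<otimes>\<^bsub>FI\<^esub> g)))"

end

theory Submission
  imports Defs
begin


lemma sf_carrier: "carrier (special_fiber R m L) = {x. (\<forall>n. \<exists>a \<in> ideal_pow R L n. x n = fib_den R m L n +>\<^bsub>R\<^esub> a)
          \<and> finite {n. x n \<noteq> fib_den R m L n}}"
  unfolding special_fiber_def ring.defs by (simp only: ring.simps partial_object.simps monoid.simps)
lemma sf_add: "x \<oplus>\<^bsub>special_fiber R m L\<^esub> y = (\<lambda>n. x n <+>\<^bsub>R\<^esub> y n)"
  unfolding special_fiber_def ring.defs by (simp only: ring.simps partial_object.simps monoid.simps)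
lemma sf_zero: "\<zero>\<^bsub>special_fiber R m L\<^esub> = (\<lambda>n. fib_den R m L n)"
  unfolding special_fiber_def ring.defs by (simp only: ring.simps partial_object.simps monoid.simps)
lemma sf_mult: "x \<otimes>\<^bsub>special_fiber R m L\<^esub> y = (\<lambda>n. fib_den R m L n +>\<^bsub>R\<^esub>
                 (\<Oplus>\<^bsub>R\<^esub>i\<in>{..n}. rep (x i) \<otimes>\<^bsub>R\<^esub> rep (y (n - i))))"
  unfolding special_fiber_def ring.defs by (simp only: ring.simps partial_object.simps monoid.simps)

context cring begin

lemma ideal_add: "ideal C R \<Longrightarrow> a \<in> C \<Longrightarrow> b \<in> C \<Longrightarrow> a \<oplus> b \<in> C"
  by (rule additive_subgroup.a_closed[OF ideal.axioms(1)])
lemma ideal_zero: "ideal C R \<Longrightarrow> \<zero> \<in> C"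
  by (rule additive_subgroup.zero_closed[OF ideal.axioms(1)])
lemma ideal_neg: "ideal C R \<Longrightarrow> a \<in> C \<Longrightarrow> \<ominus> a \<in> C"
  by (rule additive_subgroup.a_inv_closed[OF ideal.axioms(1)])
lemma ideal_carr: "ideal C R \<Longrightarrow> a \<in> C \<Longrightarrow> a \<in> carrier R"
  by (rule ideal.Icarr)
lemma ideal_sub: "ideal C R \<Longrightarrow> C \<subseteq> carrier R"
  using ideal.Icarr by auto
lemma ideal_lmult: "ideal C R \<Longrightarrow> a \<in> C \<Longrightarrow> x \<in> carrier R \<Longrightarrow> x \<otimes> a \<in> C"
  by (rule ideal.I_l_closed)
lemma ideal_rmult: "ideal C R \<Longrightarrow> a \<in> C \<Longrightarrow> x \<in> carrier R \<Longrightarrow> a \<otimes> x \<in> C"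
  by (rule ideal.I_r_closed)
lemma ideal_minus: "ideal C R \<Longrightarrow> a \<in> C \<Longrightarrow> b \<in> C \<Longrightarrow> a \<ominus> b \<in> C"
  by (simp add: a_minus_def ideal_add ideal_neg)

lemma ideal_finsum: assumes C: "ideal C R" shows "finite A \<Longrightarrow> (\<And>i. i \<in> A \<Longrightarrow> f i \<in> C) \<Longrightarrow> finsum R f A \<in> C"
proof (induction A rule: finite_induct)
  case empty then show ?case by (simp add: ideal_zero C)
next
  case (insert x F)
  have "f \<in> F \<rightarrow> carrier R" "f x \<in> carrier R" using insert ideal_carr[OF C] by auto
  then show ?case using insert by (simp add: finsum_insert ideal_add[OF C])
qed

lemma is_set_ideals [simp]: "carrier (ideals_set R) = {I. ideal I R}"
  "monoid.mult (ideals_set R) = ideal_prod R" "monoid.one (ideals_set R) = carrier R"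
  by (simp_all add: ideals_set_def)

lemma ideal_pow_ideal: "ideal I R \<Longrightarrow> ideal (ideal_pow R I n) R"
  using monoid.nat_pow_closed[OF comm_monoid.axioms(1)[OF ideals_set_is_comm_monoid], of I n]
  by (simp add: ideal_pow_def)
lemma ideal_pow_0 [simp]: "ideal_pow R I 0 = carrier R"
  by (simp add: ideal_pow_def)
lemma ideal_pow_Suc: "ideal_pow R I (Suc n) = ideal_pow R I n \<cdot> I"
  by (simp add: ideal_pow_def)
lemma ideal_pow_add: "ideal I R \<Longrightarrow> ideal_pow R I (i + j) = ideal_pow R I i \<cdot> ideal_pow R I j"
  using monoid.nat_pow_mult[OF comm_monoid.axioms(1)[OF ideals_set_is_comm_monoid], of I i j]
  by (simp add: ideal_pow_def)
lemma ideal_pow_1: "ideal I R \<Longrightarrow> ideal_pow R I (Suc 0) = I"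
  by (simp add: ideal_pow_Suc ideal_prod_commute oneideal ideal_prod_one)

lemma prod_mem: "a \<in> A \<Longrightarrow> b \<in> B \<Longrightarrow> a \<otimes> b \<in> A \<cdot> B"
  by (rule ideal_prod.prod)

lemma prod_sub: assumes "ideal C R" "\<And>a b. a \<in> A \<Longrightarrow> b \<in> B \<Longrightarrow> a \<otimes> b \<in> C"
  shows "A \<cdot> B \<subseteq> C"
proof
  fix x assume "x \<in> A \<cdot> B" then show "x \<in> C"
    by (induction x rule: ideal_prod.induct) (auto simp: assms ideal_add)
qed

lemma prod_mono: "ideal A' R \<Longrightarrow> ideal B' R \<Longrightarrow> A \<subseteq> A' \<Longrightarrow> B \<subseteq> B' \<Longrightarrow> A \<cdot> B \<subseteq> A' \<cdot> B'"
  by (rule prod_sub) (auto intro: ideal_prod_is_ideal prod_mem)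

lemma prod_sub_left: "ideal A R \<Longrightarrow> ideal B R \<Longrightarrow> A \<cdot> B \<subseteq> A"
  by (rule prod_sub) (auto intro: ideal_rmult ideal_carr)
lemma prod_sub_right: "ideal A R \<Longrightarrow> ideal B R \<Longrightarrow> A \<cdot> B \<subseteq> B"
  by (rule prod_sub) (auto intro: ideal_lmult ideal_carr)

lemma pow_mono: "ideal A R \<Longrightarrow> ideal B R \<Longrightarrow> A \<subseteq> B \<Longrightarrow> ideal_pow R A n \<subseteq> ideal_pow R B n"
proof (induction n)
  case (Suc n)
  then show ?case unfolding ideal_pow_Suc by (intro prod_mono ideal_pow_ideal) auto
qed simp

lemma pow_mem_mult: "ideal L R \<Longrightarrow> a \<in> ideal_pow R L i \<Longrightarrow> b \<in> ideal_pow R L j \<Longrightarrow> a \<otimes> b \<in> ideal_pow R L (i + j)"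
  by (simp add: ideal_pow_add prod_mem)

lemma mpow_mult1: assumes "ideal m R" "ideal L R" "a \<in> m \<cdot> ideal_pow R L i" "b \<in> ideal_pow R L j"
  shows "a \<otimes> b \<in> m \<cdot> ideal_pow R L (i + j)"
proof -
  have "a \<otimes> b \<in> (m \<cdot> ideal_pow R L i) \<cdot> ideal_pow R L j" using assms by (simp add: prod_mem)
  also have "\<dots> = m \<cdot> ideal_pow R L (i + j)"
    using assms by (simp add: ideal_prod_assoc ideal_pow_ideal ideal_pow_add)
  finally show ?thesis .
qed

lemma mpow_mult2: assumes "ideal m R" "ideal L R" "a \<in> ideal_pow R L i" "b \<in> m \<cdot> ideal_pow R L j"
  shows "a \<otimes> b \<in> m \<cdot> ideal_pow R L (i + j)"
proof -
  have c: "a \<in> carrier R" "b \<in> carrier R" using assms ideal_carr ideal_pow_ideal ideal_prod_is_ideal by blast+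
  have "b \<otimes> a \<in> m \<cdot> ideal_pow R L (j + i)" using mpow_mult1 assms by blast
  then show ?thesis using c by (simp add: m_comm add.commute)
qed

lemma coset_mem: "x \<in> H +> a \<longleftrightarrow> (\<exists>h\<in>H. x = h \<oplus> a)"
  by (auto simp: a_r_coset_def')

lemma rcos_self: "ideal H R \<Longrightarrow> a \<in> carrier R \<Longrightarrow> a \<in> H +> a"
  using coset_mem ideal_zero by fastforce

lemma rcos_eq: "ideal H R \<Longrightarrow> a \<in> carrier R \<Longrightarrow> b \<in> H +> a \<Longrightarrow> H +> b = H +> a"
  by (metis a_repr_independence additive_subgroup.a_subgroup ideal.axioms(1))

lemma rcos_zero_iff: "ideal H R \<Longrightarrow> a \<in> carrier R \<Longrightarrow> (H +> a = H) \<longleftrightarrow> a \<in> H"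
  by (metis a_coset_join1 a_coset_join2 additive_subgroup.a_subgroup ideal.axioms(1))

lemma rcos_sum: "ideal H R \<Longrightarrow> a \<in> carrier R \<Longrightarrow> b \<in> carrier R \<Longrightarrow> (H +> a) <+> (H +> b) = H +> (a \<oplus> b)"
  by (rule ideal.a_rcos_sum)

lemma rcos_carr: "ideal H R \<Longrightarrow> a \<in> carrier R \<Longrightarrow> x \<in> H +> a \<Longrightarrow> x \<in> carrier R"
  using coset_mem ideal_carr by auto

lemma rcos_eq_iff: assumes "ideal H R" "a \<in> carrier R" "b \<in> carrier R"
  shows "H +> a = H +> b \<longleftrightarrow> a \<ominus> b \<in> H"
proof
  assume "H +> a = H +> b"
  then have "a \<in> H +> b" using rcos_self assms by blast
  then obtain h where "h \<in> H" "a = h \<oplus> b" using coset_mem by blast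
  then show "a \<ominus> b \<in> H" using assms ideal_carr
    by (metis a_minus_def add.inv_solve_right' add.m_closed)
next
  assume "a \<ominus> b \<in> H"
  then have "a = (a \<ominus> b) \<oplus> b" using assms by (simp add: a_minus_def a_assoc l_neg)
  then have "a \<in> H +> b" using \<open>a \<ominus> b \<in> H\<close> coset_mem by blast
  then show "H +> a = H +> b" using rcos_eq assms by blast
qed

lemma rep_coset: assumes "ideal H R" "a \<in> carrier R"
  shows "rep (H +> a) \<in> H +> a" "H +> rep (H +> a) = H +> a" "\<exists>h\<in>H. rep (H +> a) = h \<oplus> a"
proof -
  show 1: "rep (H +> a) \<in> H +> a" unfolding rep_def using rcos_self[OF assms] by (rule someI)
  then show "H +> rep (H +> a) = H +> a" using rcos_eq assms by blast
  show "\<exists>h\<in>H. rep (H +> a) = h \<oplus> a" using 1 coset_mem by blast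
qed

end

context cring begin

lemma fd_ideal: "ideal m R \<Longrightarrow> ideal L R \<Longrightarrow> ideal (fib_den R m L n) R"
  unfolding fib_den_def by (intro ideal_prod_is_ideal ideal_pow_ideal)
lemma fd_sub: "ideal m R \<Longrightarrow> ideal L R \<Longrightarrow> fib_den R m L n \<subseteq> ideal_pow R L n"
  unfolding fib_den_def by (intro prod_sub_right ideal_pow_ideal)

lemma sf_elem: assumes "ideal m R" "ideal L R" "x \<in> carrier (special_fiber R m L)"
  shows "rep (x n) \<in> ideal_pow R L n" "x n = fib_den R m L n +> rep (x n)"
proof -
  obtain a where a: "a \<in> ideal_pow R L n" "x n = fib_den R m L n +> a"
    using assms(3) by (auto simp: sf_carrier)
  have ac: "a \<in> carrier R" using a ideal_carr ideal_pow_ideal assms by blast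
  have "\<exists>h\<in>fib_den R m L n. rep (x n) = h \<oplus> a"
    using rep_coset(3)[OF fd_ideal[OF assms(1,2)] ac] a by simp
  then obtain h where h: "h \<in> fib_den R m L n" "rep (x n) = h \<oplus> a" by blast
  have "h \<in> ideal_pow R L n" using h(1) fd_sub[OF assms(1,2)] by blast
  then show "rep (x n) \<in> ideal_pow R L n" using h(2) a(1) ideal_add ideal_pow_ideal assms(2) by auto
  show "x n = fib_den R m L n +> rep (x n)" using rep_coset(2)[OF fd_ideal[OF assms(1,2)] ac] a by simp
qed

lemma sf_rep_carr: assumes "ideal m R" "ideal L R" "x \<in> carrier (special_fiber R m L)"
  shows "rep (x n) \<in> carrier R"
  using sf_elem(1)[OF assms] ideal_carr ideal_pow_ideal assms(2) by blast

lemma sf_mk: assumes "ideal m R" "ideal L R" "\<And>n. h n \<in> ideal_pow R L n" "finite {n. h n \<noteq> \<zero>}"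
  shows "(\<lambda>n. fib_den R m L n +> h n) \<in> carrier (special_fiber R m L)"
proof -
  have "{n. fib_den R m L n +> h n \<noteq> fib_den R m L n} \<subseteq> {n. h n \<noteq> \<zero>}"
  proof
    fix n assume "n \<in> {n. fib_den R m L n +> h n \<noteq> fib_den R m L n}"
    then show "n \<in> {n. h n \<noteq> \<zero>}"
      using rcos_zero_iff[OF fd_ideal[OF assms(1,2)], of "\<zero>"] ideal_zero[OF fd_ideal[OF assms(1,2)]] by auto
  qed
  then have "finite {n. fib_den R m L n +> h n \<noteq> fib_den R m L n}" using assms(4) finite_subset by blast
  then show ?thesis using assms(3) by (auto simp: sf_carrier)
qed

lemma sf_tail: assumes "x \<in> carrier (special_fiber R m L)"
  shows "\<exists>N. \<forall>n\<ge>N. x n = fib_den R m L n"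
proof -
  have "finite {n. x n \<noteq> fib_den R m L n}" using assms by (simp add: sf_carrier)
  then obtain N where "\<forall>n\<in>{n. x n \<noteq> fib_den R m L n}. n < N" using finite_nat_set_iff_bounded by blast
  then show ?thesis by (meson linorder_not_le mem_Collect_eq)
qed

lemma sf_rep_D: assumes "ideal m R" "ideal L R" "x \<in> carrier (special_fiber R m L)" "x n = fib_den R m L n"
  shows "rep (x n) \<in> fib_den R m L n"
proof -
  have "fib_den R m L n +> rep (x n) = fib_den R m L n"
    using sf_elem(2)[OF assms(1-3), of n] assms(4) by simp
  then show ?thesis using rcos_zero_iff[OF fd_ideal[OF assms(1,2)] sf_rep_carr[OF assms(1-3)]] by blast
qed

lemma sf_add_elem: assumes "ideal m R" "ideal L R" "x \<in> carrier (special_fiber R m L)" "y \<in> carrier (special_fiber R m L)"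
  shows "(x \<oplus>\<^bsub>special_fiber R m L\<^esub> y) n = fib_den R m L n +> (rep (x n) \<oplus> rep (y n))"
proof -
  have "(x \<oplus>\<^bsub>special_fiber R m L\<^esub> y) n = x n <+> y n" by (simp add: sf_add)
  also have "\<dots> = (fib_den R m L n +> rep (x n)) <+> (fib_den R m L n +> rep (y n))"
    by (rule arg_cong2[where f="set_add R", OF sf_elem(2)[OF assms(1-3)] sf_elem(2)[OF assms(1,2,4)]])
  also have "\<dots> = fib_den R m L n +> (rep (x n) \<oplus> rep (y n))"
    by (rule rcos_sum[OF fd_ideal[OF assms(1,2)] sf_rep_carr[OF assms(1-3)] sf_rep_carr[OF assms(1,2,4)]])
  finally show ?thesis .
qed

lemma sf_add_closed: assumes "ideal m R" "ideal L R" "x \<in> carrier (special_fiber R m L)" "y \<in> carrier (special_fiber R m L)"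
  shows "x \<oplus>\<^bsub>special_fiber R m L\<^esub> y \<in> carrier (special_fiber R m L)"
proof -
  let ?h = "\<lambda>n. rep (x n) \<oplus> rep (y n)"
  have e: "x \<oplus>\<^bsub>special_fiber R m L\<^esub> y = (\<lambda>n. fib_den R m L n +> ?h n)"
    using sf_add_elem[OF assms] by auto
  obtain N1 where N1: "\<forall>n\<ge>N1. x n = fib_den R m L n" using sf_tail assms(3) by blast
  obtain N2 where N2: "\<forall>n\<ge>N2. y n = fib_den R m L n" using sf_tail assms(4) by blast
  have "\<forall>n\<ge>max N1 N2. (\<lambda>n. fib_den R m L n +> ?h n) n = fib_den R m L n"
  proof (intro allI impI)
    fix n assume "max N1 N2 \<le> n"
    then have "rep (x n) \<in> fib_den R m L n" "rep (y n) \<in> fib_den R m L n"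
      using sf_rep_D assms N1 N2 by auto
    then have "?h n \<in> fib_den R m L n" using ideal_add fd_ideal assms by blast
    then show "(\<lambda>n. fib_den R m L n +> ?h n) n = fib_den R m L n"
      using rcos_zero_iff[OF fd_ideal[OF assms(1,2)]] ideal_carr[OF fd_ideal[OF assms(1,2)]] by auto
  qed
  then have "{n. (\<lambda>n. fib_den R m L n +> ?h n) n \<noteq> fib_den R m L n} \<subseteq> {..<max N1 N2}"
    by (auto simp: not_less[symmetric])
  then have fin: "finite {n. (\<lambda>n. fib_den R m L n +> ?h n) n \<noteq> fib_den R m L n}"
    using finite_subset by blast
  have "\<forall>n. ?h n \<in> ideal_pow R L n" using sf_elem(1) assms ideal_add ideal_pow_ideal by blast
  then show ?thesis unfolding e using fin by (auto simp: sf_carrier)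
qed

lemma sf_zero_closed: assumes "ideal m R" "ideal L R"
  shows "\<zero>\<^bsub>special_fiber R m L\<^esub> \<in> carrier (special_fiber R m L)"
proof -
  have "(\<lambda>n. fib_den R m L n +> \<zero>) \<in> carrier (special_fiber R m L)"
    by (rule sf_mk[OF assms]) (auto intro: ideal_zero ideal_pow_ideal assms)
  moreover have "(\<lambda>n. fib_den R m L n +> \<zero>) = \<zero>\<^bsub>special_fiber R m L\<^esub>"
    using rcos_zero_iff[OF fd_ideal[OF assms], of "\<zero>"] ideal_zero[OF fd_ideal[OF assms]] by (auto simp: sf_zero)
  ultimately show ?thesis by simp
qed

lemma sf_abelian_monoid: assumes "ideal m R" "ideal L R"
  shows "abelian_monoid (special_fiber R m L)"
proof (rule abelian_monoidI)
  let ?F = "special_fiber R m L"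
  let ?D = "fib_den R m L"
  have DI: "\<And>n. ideal (?D n) R" using fd_ideal assms by blast
  show "\<And>x y. x \<in> carrier ?F \<Longrightarrow> y \<in> carrier ?F \<Longrightarrow> x \<oplus>\<^bsub>?F\<^esub> y \<in> carrier ?F"
    using sf_add_closed assms by blast
  show "\<zero>\<^bsub>?F\<^esub> \<in> carrier ?F" using sf_zero_closed assms by blast
  show "(x \<oplus>\<^bsub>?F\<^esub> y) \<oplus>\<^bsub>?F\<^esub> z = x \<oplus>\<^bsub>?F\<^esub> (y \<oplus>\<^bsub>?F\<^esub> z)"
    if "x \<in> carrier ?F" "y \<in> carrier ?F" "z \<in> carrier ?F" for x y z
  proof
    fix n
    have c: "rep (x n) \<in> carrier R" "rep (y n) \<in> carrier R" "rep (z n) \<in> carrier R"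
      using sf_rep_carr assms that by blast+
    have "((x \<oplus>\<^bsub>?F\<^esub> y) \<oplus>\<^bsub>?F\<^esub> z) n = (x \<oplus>\<^bsub>?F\<^esub> y) n <+> z n" by (simp add: sf_add)
    also have "\<dots> = (?D n +> (rep (x n) \<oplus> rep (y n))) <+> (?D n +> rep (z n))"
      by (rule arg_cong2[where f="set_add R", OF sf_add_elem[OF assms that(1,2)] sf_elem(2)[OF assms that(3)]])
    also have "\<dots> = ?D n +> ((rep (x n) \<oplus> rep (y n)) \<oplus> rep (z n))" using rcos_sum[OF DI] c by simp
    also have "\<dots> = ?D n +> (rep (x n) \<oplus> (rep (y n) \<oplus> rep (z n)))" using c by (simp add: a_assoc)
    also have "\<dots> = (?D n +> rep (x n)) <+> (?D n +> (rep (y n) \<oplus> rep (z n)))" using rcos_sum[OF DI] c by simp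
    also have "\<dots> = x n <+> (y \<oplus>\<^bsub>?F\<^esub> z) n"
      by (rule arg_cong2[where f="set_add R", OF sf_elem(2)[OF assms that(1), symmetric] sf_add_elem[OF assms that(2,3), symmetric]])
    also have "\<dots> = (x \<oplus>\<^bsub>?F\<^esub> (y \<oplus>\<^bsub>?F\<^esub> z)) n" by (simp add: sf_add)
    finally show "((x \<oplus>\<^bsub>?F\<^esub> y) \<oplus>\<^bsub>?F\<^esub> z) n = (x \<oplus>\<^bsub>?F\<^esub> (y \<oplus>\<^bsub>?F\<^esub> z)) n" .
  qed
  show "\<zero>\<^bsub>?F\<^esub> \<oplus>\<^bsub>?F\<^esub> x = x" if "x \<in> carrier ?F" for x
  proof
    fix n
    have c: "rep (x n) \<in> carrier R" using sf_rep_carr assms that by blast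
    have z: "?D n = ?D n +> \<zero>" using rcos_zero_iff[OF DI, of "\<zero>"] ideal_zero[OF DI] by simp
    have "(\<zero>\<^bsub>?F\<^esub> \<oplus>\<^bsub>?F\<^esub> x) n = ?D n <+> x n" by (simp add: sf_add sf_zero)
    also have "\<dots> = (?D n +> \<zero>) <+> (?D n +> rep (x n))"
      by (rule arg_cong2[where f="set_add R", OF z sf_elem(2)[OF assms that]])
    also have "\<dots> = ?D n +> rep (x n)" using rcos_sum[OF DI] c by simp
    finally show "(\<zero>\<^bsub>?F\<^esub> \<oplus>\<^bsub>?F\<^esub> x) n = x n" using sf_elem(2)[OF assms that] by simp
  qed
  show "x \<oplus>\<^bsub>?F\<^esub> y = y \<oplus>\<^bsub>?F\<^esub> x" if "x \<in> carrier ?F" "y \<in> carrier ?F" for x y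
  proof
    fix n
    have c: "rep (x n) \<in> carrier R" "rep (y n) \<in> carrier R" using sf_rep_carr assms that by blast+
    show "(x \<oplus>\<^bsub>?F\<^esub> y) n = (y \<oplus>\<^bsub>?F\<^esub> x) n"
      using sf_add_elem[OF assms that] sf_add_elem[OF assms that(2,1)] c by (simp add: a_comm)
  qed
qed

lemma sf_finsum: assumes "ideal m R" "ideal L R" "finite G" "f \<in> G \<rightarrow> carrier (special_fiber R m L)"
  shows "(finsum (special_fiber R m L) f G) n = fib_den R m L n +> (\<Oplus>g\<in>G. rep (f g n))"
  using assms(3,4)
proof (induction G rule: finite_induct)
  case empty
  have "fib_den R m L n +> \<zero> = fib_den R m L n"
    using rcos_zero_iff[OF fd_ideal[OF assms(1,2)], of "\<zero>"] ideal_zero[OF fd_ideal[OF assms(1,2)]] by simp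
  moreover have "finsum (special_fiber R m L) f {} = (\<lambda>n. fib_den R m L n)"
    using abelian_monoid.finsum_empty[OF sf_abelian_monoid[OF assms(1,2)], of f] by (simp add: sf_zero)
  ultimately show ?case by simp
next
  case (insert x F)
  let ?F = "special_fiber R m L"
  have fx: "f x \<in> carrier ?F" and fF: "f \<in> F \<rightarrow> carrier ?F" using insert by auto
  have sc: "finsum ?F f F \<in> carrier ?F"
    using abelian_monoid.finsum_closed[OF sf_abelian_monoid[OF assms(1,2)] fF] .
  have rc: "(\<lambda>g. rep (f g n)) \<in> F \<rightarrow> carrier R" using sf_rep_carr[OF assms(1,2)] fF by blast
  have "finsum ?F f (insert x F) = f x \<oplus>\<^bsub>?F\<^esub> finsum ?F f F"
    using abelian_monoid.finsum_insert[OF sf_abelian_monoid[OF assms(1,2)] insert(1,2) fF fx] .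
  then have "finsum ?F f (insert x F) n = f x n <+> finsum ?F f F n" by (simp add: sf_add)
  also have "\<dots> = (fib_den R m L n +> rep (f x n)) <+> (fib_den R m L n +> (\<Oplus>g\<in>F. rep (f g n)))"
    by (rule arg_cong2[where f="set_add R", OF sf_elem(2)[OF assms(1,2) fx] insert(3)[OF fF]])
  also have "\<dots> = fib_den R m L n +> (rep (f x n) \<oplus> (\<Oplus>g\<in>F. rep (f g n)))"
    using rcos_sum[OF fd_ideal[OF assms(1,2)]] sf_rep_carr[OF assms(1,2) fx] rc by (simp add: finsum_closed)
  also have "\<dots> = fib_den R m L n +> (\<Oplus>g\<in>insert x F. rep (f g n))"
    using finsum_insert[OF insert(1,2) rc] sf_rep_carr[OF assms(1,2) fx] by simp
  finally show ?case .
qed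

end

context cring begin

lemma sf_from: assumes "ideal m R" "ideal L R" "\<And>n. a n \<in> ideal_pow R L n" "\<And>n. n \<ge> N \<Longrightarrow> a n \<in> fib_den R m L n"
  shows "(\<lambda>n. fib_den R m L n +> a n) \<in> carrier (special_fiber R m L)"
proof -
  have "{n. fib_den R m L n +> a n \<noteq> fib_den R m L n} \<subseteq> {..<N}"
  proof
    fix n assume n: "n \<in> {n. fib_den R m L n +> a n \<noteq> fib_den R m L n}"
    show "n \<in> {..<N}"
    proof (rule ccontr)
      assume "n \<notin> {..<N}"
      then have "a n \<in> fib_den R m L n" using assms(4) by auto
      then have "fib_den R m L n +> a n = fib_den R m L n"
        using rcos_zero_iff[OF fd_ideal[OF assms(1,2)]] ideal_carr[OF fd_ideal[OF assms(1,2)]] by blast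
      then show False using n by simp
    qed
  qed
  then have "finite {n. fib_den R m L n +> a n \<noteq> fib_den R m L n}" using finite_subset by blast
  then show ?thesis using assms(3) by (auto simp: sf_carrier)
qed

lemma sf_mult_closed: assumes "ideal m R" "ideal L R" "x \<in> carrier (special_fiber R m L)" "y \<in> carrier (special_fiber R m L)"
  shows "x \<otimes>\<^bsub>special_fiber R m L\<^esub> y \<in> carrier (special_fiber R m L)"
proof -
  let ?h = "\<lambda>n. \<Oplus>i\<in>{..n}. rep (x i) \<otimes> rep (y (n - i))"
  have LI: "\<And>n. ideal (ideal_pow R L n) R" using ideal_pow_ideal assms(2) by blast
  have DI: "\<And>n. ideal (fib_den R m L n) R" using fd_ideal assms(1,2) by blast
  obtain N1 where N1: "\<forall>n\<ge>N1. x n = fib_den R m L n" using sf_tail assms(3) by blast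
  obtain N2 where N2: "\<forall>n\<ge>N2. y n = fib_den R m L n" using sf_tail assms(4) by blast
  have "\<And>n. ?h n \<in> ideal_pow R L n"
  proof -
    fix n
    show "?h n \<in> ideal_pow R L n"
    proof (rule ideal_finsum[OF LI], simp)
      fix i assume "i \<in> {..n}"
      then have "ideal_pow R L n = ideal_pow R L (i + (n - i))" by simp
      then show "rep (x i) \<otimes> rep (y (n - i)) \<in> ideal_pow R L n"
        using pow_mem_mult[OF assms(2) sf_elem(1)[OF assms(1,2,3)] sf_elem(1)[OF assms(1,2,4)]] by simp
    qed
  qed
  moreover have "\<And>n. n \<ge> N1 + N2 \<Longrightarrow> ?h n \<in> fib_den R m L n"
  proof -
    fix n assume n: "n \<ge> N1 + N2"
    show "?h n \<in> fib_den R m L n"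
    proof (rule ideal_finsum[OF DI], simp)
      fix i assume "i \<in> {..n}"
      then have e: "n = i + (n - i)" by simp
      show "rep (x i) \<otimes> rep (y (n - i)) \<in> fib_den R m L n"
      proof (cases "i \<ge> N1")
        case True
        then have "rep (x i) \<in> m \<cdot> ideal_pow R L i" using sf_rep_D[OF assms(1,2,3)] N1 unfolding fib_den_def by blast
        then have "rep (x i) \<otimes> rep (y (n - i)) \<in> m \<cdot> ideal_pow R L (i + (n - i))"
          using mpow_mult1[OF assms(1,2)] sf_elem(1)[OF assms(1,2,4)] by blast
        then show ?thesis using e unfolding fib_den_def by simp
      next
        case False
        then have "n - i \<ge> N2" using n by linarith
        then have "rep (y (n - i)) \<in> m \<cdot> ideal_pow R L (n - i)" using sf_rep_D[OF assms(1,2,4)] N2 unfolding fib_den_def by blast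
        then have "rep (x i) \<otimes> rep (y (n - i)) \<in> m \<cdot> ideal_pow R L (i + (n - i))"
          using mpow_mult2[OF assms(1,2)] sf_elem(1)[OF assms(1,2,3)] by blast
        then show ?thesis using e unfolding fib_den_def by simp
      qed
    qed
  qed
  ultimately have "(\<lambda>n. fib_den R m L n +> ?h n) \<in> carrier (special_fiber R m L)"
    by (rule sf_from[OF assms(1,2)])
  then show ?thesis by (simp add: sf_mult)
qed

lemma sf_map_closed: assumes "ideal m R" "ideal J R" "ideal L R" "J \<subseteq> L" "x \<in> carrier (special_fiber R m J)"
  shows "fib_map R m J L x \<in> carrier (special_fiber R m L)"
proof -
  obtain N where N: "\<forall>n\<ge>N. x n = fib_den R m J n" using sf_tail assms(5) by blast
  have "(\<lambda>n. fib_den R m L n +> rep (x n)) \<in> carrier (special_fiber R m L)"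
  proof (rule sf_from[OF assms(1,3)])
    fix n show "rep (x n) \<in> ideal_pow R L n"
      using sf_elem(1)[OF assms(1,2,5)] pow_mono[OF assms(2,3,4)] by blast
  next
    fix n assume "n \<ge> N"
    then have "rep (x n) \<in> m \<cdot> ideal_pow R J n" using sf_rep_D[OF assms(1,2,5)] N unfolding fib_den_def by blast
    moreover have "m \<cdot> ideal_pow R J n \<subseteq> m \<cdot> ideal_pow R L n"
      by (intro prod_mono assms ideal_pow_ideal pow_mono) auto
    ultimately show "rep (x n) \<in> fib_den R m L n" unfolding fib_den_def by blast
  qed
  then show ?thesis by (simp add: fib_map_def)
qed

end


definition lcomb :: "('a, 'b) ring_scheme \<Rightarrow> 'a set \<Rightarrow> 'a set \<Rightarrow> 'a set" where
  "lcomb R S H = {finsum R (\<lambda>s. h s \<otimes>\<^bsub>R\<^esub> s) S | h. h \<in> S \<rightarrow> H}"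

context cring begin

lemma sadd_mem: "x \<in> A <+>\<^bsub>R\<^esub> B \<longleftrightarrow> (\<exists>a\<in>A. \<exists>b\<in>B. x = a \<oplus> b)"
  by (auto simp: set_add_def')

lemma sadd_left: "ideal A R \<Longrightarrow> ideal B R \<Longrightarrow> A \<subseteq> A <+>\<^bsub>R\<^esub> B"
  using sadd_mem ideal_zero ideal_carr by (metis r_zero subsetI)
lemma sadd_right: "ideal A R \<Longrightarrow> ideal B R \<Longrightarrow> B \<subseteq> A <+>\<^bsub>R\<^esub> B"
  using sadd_mem ideal_zero ideal_carr by (metis l_zero subsetI)
lemma sadd_sub: assumes "ideal C R" "A \<subseteq> C" "B \<subseteq> C" shows "A <+>\<^bsub>R\<^esub> B \<subseteq> C"
proof
  fix x assume "x \<in> A <+>\<^bsub>R\<^esub> B"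
  then obtain a b where ab: "a \<in> A" "b \<in> B" "x = a \<oplus> b" using sadd_mem by blast
  have "a \<in> C" "b \<in> C" using ab assms by auto
  then show "x \<in> C" using ab(3) ideal_add[OF assms(1)] by simp
qed

lemma exists_max_ideal: assumes "ideal P R" "\<one> \<notin> P" shows "\<exists>M. maximalideal M R \<and> P \<subseteq> M"
proof -
  define S where "S = {J. ideal J R \<and> P \<subseteq> J \<and> \<one> \<notin> J}"
  have "\<exists>M\<in>S. \<forall>J\<in>S. M \<subseteq> J \<longrightarrow> J = M"
  proof (rule subset_Zorn)
    fix C assume C: "subset.chain S C"
    show "\<exists>U\<in>S. \<forall>X\<in>C. X \<subseteq> U"
    proof (cases "C = {}")
      case True then show ?thesis using assms S_def by auto
    next
      case False
      have ch: "subset.chain {I. ideal I R} C" using C S_def by (auto simp: pred_on.chain_def)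
      have "ideal (\<Union>C) R" using chain_Union_is_ideal[OF ch] False by simp
      moreover have "P \<subseteq> \<Union>C" using False C S_def unfolding pred_on.chain_def by blast
      moreover have "\<one> \<notin> \<Union>C" using C S_def by (auto simp: pred_on.chain_def)
      ultimately show ?thesis using S_def by auto
    qed
  qed
  then obtain M where M: "M \<in> S" "\<forall>J\<in>S. M \<subseteq> J \<longrightarrow> J = M" by blast
  have "maximalideal M R"
  proof (rule maximalidealI)
    show "ideal M R" using M S_def by auto
    show "carrier R \<noteq> M" using M S_def by auto
    fix J assume J: "ideal J R" "M \<subseteq> J" "J \<subseteq> carrier R"
    show "J = M \<or> J = carrier R"
    proof (cases "\<one> \<in> J")
      case True then show ?thesis using ideal.one_imp_carrier[OF J(1)] by blast
    next
      case False then have "J \<in> S" using J M S_def by auto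
      then show ?thesis using M J by blast
    qed
  qed
  then show ?thesis using M S_def by auto
qed

lemma local_unit: assumes "maximalideal m R" "\<forall>M. maximalideal M R \<longrightarrow> M = m" "\<mu> \<in> m"
  shows "\<exists>v\<in>carrier R. v \<otimes> (\<one> \<ominus> \<mu>) = \<one>"
proof (rule ccontr)
  assume nu: "\<not> ?thesis"
  have mc: "\<mu> \<in> carrier R" using assms(3) ideal_carr maximalideal.axioms(1)[OF assms(1)] by blast
  have uc: "\<one> \<ominus> \<mu> \<in> carrier R" using mc by simp
  have "\<one> \<notin> PIdl (\<one> \<ominus> \<mu>)" using nu by (auto simp: cgenideal_def)
  then obtain M where "maximalideal M R" "PIdl (\<one> \<ominus> \<mu>) \<subseteq> M"
    using exists_max_ideal cgenideal_ideal[OF uc] by blast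
  then have "\<one> \<ominus> \<mu> \<in> m" using assms(2) cgenideal_self[OF uc] by blast
  then have "(\<one> \<ominus> \<mu>) \<oplus> \<mu> \<in> m" using ideal_add maximalideal.axioms(1)[OF assms(1)] assms(3) by blast
  moreover have "(\<one> \<ominus> \<mu>) \<oplus> \<mu> = \<one>" using mc by (simp add: a_minus_def a_assoc l_neg)
  ultimately have "\<one> \<in> m" by simp
  then show False using ideal.one_imp_carrier maximalideal.axioms(1)[OF assms(1)] maximalideal.I_notcarr[OF assms(1)]
    by metis
qed

lemma local_cancel: assumes "maximalideal m R" "\<forall>M. maximalideal M R \<longrightarrow> M = m" "\<mu> \<in> m"
  "ideal N R" "x \<in> carrier R" "(\<one> \<ominus> \<mu>) \<otimes> x \<in> N"
  shows "x \<in> N"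
proof -
  obtain v where v: "v \<in> carrier R" "v \<otimes> (\<one> \<ominus> \<mu>) = \<one>" using local_unit assms(1-3) by blast
  have mc: "\<mu> \<in> carrier R" using assms(3) ideal_carr maximalideal.axioms(1)[OF assms(1)] by blast
  have "v \<otimes> ((\<one> \<ominus> \<mu>) \<otimes> x) \<in> N" using ideal_lmult[OF assms(4,6) v(1)] .
  moreover have "v \<otimes> ((\<one> \<ominus> \<mu>) \<otimes> x) = x" using v mc assms(5) by (simp add: m_assoc[symmetric])
  ultimately show ?thesis by simp
qed

lemma lcomb_add: assumes "finite S" "S \<subseteq> carrier R" "h \<in> S \<rightarrow> carrier R" "h' \<in> S \<rightarrow> carrier R"
  shows "finsum R (\<lambda>s. h s \<otimes> s) S \<oplus> finsum R (\<lambda>s. h' s \<otimes> s) S = finsum R (\<lambda>s. (h s \<oplus> h' s) \<otimes> s) S"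
proof -
  have "finsum R (\<lambda>s. h s \<otimes> s) S \<oplus> finsum R (\<lambda>s. h' s \<otimes> s) S = finsum R (\<lambda>s. h s \<otimes> s \<oplus> h' s \<otimes> s) S"
    using assms by (intro finsum_addf[symmetric]) (auto simp: Pi_iff subset_iff)
  also have "\<dots> = finsum R (\<lambda>s. (h s \<oplus> h' s) \<otimes> s) S"
    using assms by (intro finsum_cong') (auto simp: l_distr Pi_iff subset_iff)
  finally show ?thesis .
qed

lemma lcomb_smult: assumes "finite S" "S \<subseteq> carrier R" "h \<in> S \<rightarrow> carrier R" "r \<in> carrier R"
  shows "r \<otimes> finsum R (\<lambda>s. h s \<otimes> s) S = finsum R (\<lambda>s. (r \<otimes> h s) \<otimes> s) S"
proof -
  have "r \<otimes> finsum R (\<lambda>s. h s \<otimes> s) S = finsum R (\<lambda>s. r \<otimes> (h s \<otimes> s)) S"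
    using assms by (intro finsum_rdistr) (auto simp: Pi_iff subset_iff)
  also have "\<dots> = finsum R (\<lambda>s. (r \<otimes> h s) \<otimes> s) S"
    using assms by (intro finsum_cong') (auto simp: m_assoc Pi_iff subset_iff)
  finally show ?thesis .
qed

lemma lcomb_ideal: assumes "finite S" "S \<subseteq> carrier R" "ideal H R"
  shows "ideal (lcomb R S H) R"
proof -
  have Hc: "H \<subseteq> carrier R" using ideal_sub[OF assms(3)] .
  have closed: "finsum R (\<lambda>s. h s \<otimes> s) S \<in> carrier R" if "h \<in> S \<rightarrow> H" for h
    using that Hc assms(2) by (intro finsum_closed) auto
  have lmul: "r \<otimes> x \<in> lcomb R S H" if xin: "x \<in> lcomb R S H" and rc: "r \<in> carrier R" for x r
  proof -
    obtain h where h: "h \<in> S \<rightarrow> H" "x = finsum R (\<lambda>s. h s \<otimes> s) S" using xin unfolding lcomb_def by blast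
    have "r \<otimes> x = finsum R (\<lambda>s. (r \<otimes> h s) \<otimes> s) S" using h lcomb_smult[OF assms(1,2) _ rc, of h] Hc by auto
    moreover have "(\<lambda>s. r \<otimes> h s) \<in> S \<rightarrow> H" using h rc ideal_lmult[OF assms(3)] by auto
    ultimately show ?thesis by (auto simp: lcomb_def)
  qed
  show ?thesis
  proof (rule idealI[OF ring_axioms])
    show "subgroup (lcomb R S H) (add_monoid R)"
    proof (rule add.subgroupI)
      show "lcomb R S H \<subseteq> carrier R" using closed by (auto simp: lcomb_def)
      have "(\<lambda>s. \<zero>) \<in> S \<rightarrow> H" using ideal_zero[OF assms(3)] by auto
      then show "lcomb R S H \<noteq> {}" by (auto simp: lcomb_def)
      show "\<ominus> a \<in> lcomb R S H" if "a \<in> lcomb R S H" for a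
      proof -
        have ac: "a \<in> carrier R" using that closed by (auto simp: lcomb_def)
        have "(\<ominus> \<one>) \<otimes> a \<in> lcomb R S H" using lmul that by simp
        moreover have "(\<ominus> \<one>) \<otimes> a = \<ominus> a" using ac by (simp add: l_minus)
        ultimately show ?thesis by simp
      qed
      show "a \<oplus> b \<in> lcomb R S H" if ain: "a \<in> lcomb R S H" and bin: "b \<in> lcomb R S H" for a b
      proof -
        obtain h where h: "h \<in> S \<rightarrow> H" "a = finsum R (\<lambda>s. h s \<otimes> s) S" using ain unfolding lcomb_def by blast
        obtain h' where h': "h' \<in> S \<rightarrow> H" "b = finsum R (\<lambda>s. h' s \<otimes> s) S" using bin unfolding lcomb_def by blast
        have "a \<oplus> b = finsum R (\<lambda>s. (h s \<oplus> h' s) \<otimes> s) S" using h h' lcomb_add[OF assms(1,2)] Hc by blast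
        moreover have "(\<lambda>s. h s \<oplus> h' s) \<in> S \<rightarrow> H" using h h' ideal_add[OF assms(3)] by auto
        ultimately show ?thesis by (auto simp: lcomb_def)
      qed
    qed
    show "\<And>a x. a \<in> lcomb R S H \<Longrightarrow> x \<in> carrier R \<Longrightarrow> x \<otimes> a \<in> lcomb R S H" using lmul by blast
    show "a \<otimes> x \<in> lcomb R S H" if a: "a \<in> lcomb R S H" and x: "x \<in> carrier R" for a x
    proof -
      have ac: "a \<in> carrier R" using a closed unfolding lcomb_def by blast
      show ?thesis using lmul[OF a x] m_comm[OF ac x] by simp
    qed
  qed
qed

lemma lcomb_self: assumes "finite S" "S \<subseteq> carrier R" "s \<in> S"
  shows "s \<in> lcomb R S (carrier R)"
proof -
  let ?h = "\<lambda>t. if s = t then \<one> else \<zero>"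
  have "finsum R (\<lambda>t. ?h t \<otimes> t) S = finsum R (\<lambda>t. if s = t then t else \<zero>) S"
    using assms by (intro finsum_cong') auto
  also have "\<dots> = s" using finsum_singleton[OF assms(3,1), of "\<lambda>t. t"] assms(2) by (simp add: subset_iff Pi_iff)
  finally have e: "finsum R (\<lambda>t. ?h t \<otimes> t) S = s" .
  have hc: "?h \<in> S \<rightarrow> carrier R" by simp
  show ?thesis unfolding lcomb_def by (rule CollectI, rule exI[of _ ?h]) (use e hc in simp)
qed

lemma genideal_lcomb: assumes "finite S" "S \<subseteq> carrier R"
  shows "Idl S \<subseteq> lcomb R S (carrier R)"
  using genideal_minimal[OF lcomb_ideal[OF assms oneideal]] lcomb_self[OF assms] by blast

lemma mgen_lcomb: assumes "finite S" "S \<subseteq> carrier R" "ideal m R"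
  shows "m \<cdot> (Idl S) \<subseteq> lcomb R S m"
proof (rule prod_sub[OF lcomb_ideal[OF assms]])
  fix a b assume a: "a \<in> m" and b: "b \<in> Idl S"
  then obtain h where h: "h \<in> S \<rightarrow> carrier R" "b = finsum R (\<lambda>s. h s \<otimes> s) S"
    using b genideal_lcomb[OF assms(1,2)] unfolding lcomb_def by blast
  have ac: "a \<in> carrier R" using ideal_carr[OF assms(3) a] .
  have "a \<otimes> b = finsum R (\<lambda>s. (a \<otimes> h s) \<otimes> s) S" using lcomb_smult[OF assms(1,2) h(1) ac] h(2) by simp
  moreover have "(\<lambda>s. a \<otimes> h s) \<in> S \<rightarrow> m" using h(1) a ideal_rmult[OF assms(3)] by auto
  ultimately show "a \<otimes> b \<in> lcomb R S m" by (auto simp: lcomb_def)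
qed

lemma lcomb_in: assumes "finite S" "ideal N R" "S \<subseteq> N" "H \<subseteq> carrier R"
  shows "lcomb R S H \<subseteq> N"
proof
  fix x assume "x \<in> lcomb R S H"
  then obtain h where h: "h \<in> S \<rightarrow> H" "x = finsum R (\<lambda>s. h s \<otimes> s) S" unfolding lcomb_def by blast
  show "x \<in> N" unfolding h(2)
    using assms h(1) by (intro ideal_finsum[OF assms(2)] ideal_lmult) auto
qed

lemma cancel_mid: "n \<in> carrier R \<Longrightarrow> \<sigma> \<in> carrier R \<Longrightarrow> y \<in> carrier R \<Longrightarrow> (n \<oplus> (y \<oplus> \<sigma>)) \<ominus> y = n \<oplus> \<sigma>"
proof -
  assume c: "n \<in> carrier R" "\<sigma> \<in> carrier R" "y \<in> carrier R"
  have "(n \<oplus> (y \<oplus> \<sigma>)) \<ominus> y = (n \<oplus> (\<sigma> \<oplus> y)) \<oplus> \<ominus> y" using c by (simp add: a_minus_def a_comm)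
  also have "\<dots> = (n \<oplus> \<sigma>) \<oplus> (y \<oplus> \<ominus> y)" using c by (simp add: a_assoc)
  also have "\<dots> = n \<oplus> \<sigma>" using c by (simp add: r_neg)
  finally show ?thesis .
qed

lemma nak_core: assumes "maximalideal m R" "\<forall>M. maximalideal M R \<longrightarrow> M = m" "ideal N R"
  shows "finite S \<Longrightarrow> S \<subseteq> carrier R \<Longrightarrow> (\<forall>s\<in>S. s \<in> N <+>\<^bsub>R\<^esub> lcomb R S m) \<Longrightarrow> S \<subseteq> N"
proof (induction S rule: finite_induct)
  case empty then show ?case by simp
next
  case (insert x S)
  have mI: "ideal m R" using maximalideal.axioms(1)[OF assms(1)] .
  have mc: "m \<subseteq> carrier R" using ideal_sub[OF mI] .
  have Sc: "S \<subseteq> carrier R" and xc: "x \<in> carrier R" using insert by auto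
  define N2 where "N2 = N <+>\<^bsub>R\<^esub> lcomb R S m"
  have N2I: "ideal N2 R" unfolding N2_def using add_ideals[OF assms(3) lcomb_ideal[OF insert(1) Sc mI]] .
  have NN2: "N \<subseteq> N2" unfolding N2_def using sadd_left assms(3) lcomb_ideal[OF insert(1) Sc mI] by blast
  have LN2: "lcomb R S m \<subseteq> N2" unfolding N2_def using sadd_right assms(3) lcomb_ideal[OF insert(1) Sc mI] by blast
  have dec: "\<exists>n\<in>N. \<exists>\<mu>\<in>m. \<exists>\<sigma>\<in>lcomb R S m. s = n \<oplus> (\<mu> \<otimes> x \<oplus> \<sigma>)" if sin: "s \<in> insert x S" for s
  proof -
    have "s \<in> N <+>\<^bsub>R\<^esub> lcomb R (insert x S) m" using insert(5) sin by blast
    then obtain n l where nl: "n \<in> N" "l \<in> lcomb R (insert x S) m" "s = n \<oplus> l"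
      using sadd_mem by blast
    obtain h where h: "h \<in> insert x S \<rightarrow> m" "l = finsum R (\<lambda>s. h s \<otimes> s) (insert x S)"
      using nl(2) unfolding lcomb_def by blast
    have "l = h x \<otimes> x \<oplus> finsum R (\<lambda>s. h s \<otimes> s) S"
      unfolding h(2) using h(1) mc xc Sc insert(1,2) by (intro finsum_insert) auto
    moreover have "finsum R (\<lambda>s. h s \<otimes> s) S \<in> lcomb R S m"
    proof -
      have hS: "h \<in> S \<rightarrow> m" using h(1) by auto
      show ?thesis unfolding lcomb_def by (rule CollectI, rule exI[of _ h]) (simp add: hS)
    qed
    ultimately show ?thesis using nl h(1) by blast
  qed
  have xN2: "x \<in> N2"
  proof -
    obtain n \<mu> \<sigma> where d: "n \<in> N" "\<mu> \<in> m" "\<sigma> \<in> lcomb R S m" "x = n \<oplus> (\<mu> \<otimes> x \<oplus> \<sigma>)"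
      using dec by blast
    have c: "n \<in> carrier R" "\<mu> \<in> carrier R" "\<sigma> \<in> carrier R"
      using d ideal_carr assms(3) mc N2I LN2 by blast+
    have "(\<one> \<ominus> \<mu>) \<otimes> x = x \<ominus> \<mu> \<otimes> x" using c xc by (simp add: a_minus_def l_distr l_minus)
    also have "\<dots> = (n \<oplus> (\<mu> \<otimes> x \<oplus> \<sigma>)) \<ominus> \<mu> \<otimes> x"
      using d(4) by (rule arg_cong[where f="\<lambda>z. z \<ominus> \<mu> \<otimes> x"])
    also have "\<dots> = n \<oplus> \<sigma>" using cancel_mid c xc by simp
    finally have "(\<one> \<ominus> \<mu>) \<otimes> x \<in> N2" using d NN2 LN2 ideal_add[OF N2I] by auto
    then show ?thesis using local_cancel[OF assms(1,2) d(2) N2I xc] by blast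
  qed
  have "\<forall>s\<in>S. s \<in> N <+>\<^bsub>R\<^esub> lcomb R S m"
  proof
    fix s assume s: "s \<in> S"
    obtain n \<mu> \<sigma> where d: "n \<in> N" "\<mu> \<in> m" "\<sigma> \<in> lcomb R S m" "s = n \<oplus> (\<mu> \<otimes> x \<oplus> \<sigma>)"
      using dec s by blast
    have "\<mu> \<otimes> x \<in> N2" using ideal_lmult[OF N2I xN2] d(2) mc by blast
    moreover have "n \<in> N2" "\<sigma> \<in> N2" using d NN2 LN2 by auto
    ultimately have "n \<oplus> (\<mu> \<otimes> x \<oplus> \<sigma>) \<in> N2" using ideal_add[OF N2I] by simp
    then show "s \<in> N <+>\<^bsub>R\<^esub> lcomb R S m" unfolding N2_def[symmetric] using d(4) by simp
  qed
  then have SN: "S \<subseteq> N" using insert(3) Sc by blast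
  have "N2 \<subseteq> N" unfolding N2_def using sadd_sub[OF assms(3)] lcomb_in[OF insert(1) assms(3) SN mc] by blast
  then show ?case using xN2 SN by blast
qed

lemma nakayama: assumes "maximalideal m R" "\<forall>M. maximalideal M R \<longrightarrow> M = m" "ideal T R"
  "finite S" "S \<subseteq> carrier R" "Idl S \<subseteq> T <+>\<^bsub>R\<^esub> m \<cdot> (Idl S)"
  shows "Idl S \<subseteq> T"
proof -
  have mI: "ideal m R" using maximalideal.axioms(1)[OF assms(1)] .
  have "T <+>\<^bsub>R\<^esub> m \<cdot> (Idl S) \<subseteq> T <+>\<^bsub>R\<^esub> lcomb R S m"
    using mgen_lcomb[OF assms(4,5) mI] by (auto simp: sadd_mem) blast
  then have "\<forall>s\<in>S. s \<in> T <+>\<^bsub>R\<^esub> lcomb R S m" using assms(6) genideal_self[OF assms(5)] by blast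
  then have "S \<subseteq> T" using nak_core[OF assms(1-3,4,5)] by blast
  then show ?thesis using genideal_minimal[OF assms(3)] by blast
qed

end


definition glc :: "('a, 'b) ring_scheme \<Rightarrow> 'c set \<Rightarrow> ('c \<Rightarrow> 'a) \<Rightarrow> ('c \<Rightarrow> 'a set) \<Rightarrow> 'a set" where
  "glc R S v H = {finsum R (\<lambda>s. h s \<otimes>\<^bsub>R\<^esub> v s) S | h. h \<in> Pi S H}"

context cring begin

lemma cong_refl: "ideal H R \<Longrightarrow> x \<in> carrier R \<Longrightarrow> x \<ominus> x \<in> H"
  using ideal_zero by (simp add: r_neg a_minus_def)

lemma cong_trans: assumes "ideal H R" "x \<in> carrier R" "y \<in> carrier R" "z \<in> carrier R"
  "x \<ominus> y \<in> H" "y \<ominus> z \<in> H" shows "x \<ominus> z \<in> H"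
proof -
  have "x \<ominus> z = (x \<ominus> y) \<oplus> (y \<ominus> z)" using assms(2-4) by algebra
  then show ?thesis using ideal_add[OF assms(1,5,6)] by simp
qed

lemma cong_sym: assumes "ideal H R" "x \<in> carrier R" "y \<in> carrier R" "x \<ominus> y \<in> H" shows "y \<ominus> x \<in> H"
proof -
  have "y \<ominus> x = \<ominus> (x \<ominus> y)" using assms(2,3) by algebra
  then show ?thesis using ideal_neg[OF assms(1,4)] by simp
qed

lemma cong_add: assumes "ideal H R" "x \<in> carrier R" "y \<in> carrier R" "x' \<in> carrier R" "y' \<in> carrier R"
  "x \<ominus> x' \<in> H" "y \<ominus> y' \<in> H" shows "(x \<oplus> y) \<ominus> (x' \<oplus> y') \<in> H"
proof -
  have "(x \<oplus> y) \<ominus> (x' \<oplus> y') = (x \<ominus> x') \<oplus> (y \<ominus> y')" using assms(2-5) by algebra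
  then show ?thesis using ideal_add[OF assms(1,6,7)] by simp
qed

lemma cong_mult: assumes "ideal H R" "x \<in> carrier R" "x' \<in> carrier R" "w \<in> carrier R"
  "x \<ominus> x' \<in> H" shows "(x \<otimes> w) \<ominus> (x' \<otimes> w) \<in> H"
proof -
  have "(x \<otimes> w) \<ominus> (x' \<otimes> w) = (x \<ominus> x') \<otimes> w" using assms(2-4) by algebra
  then show ?thesis using ideal_rmult[OF assms(1,5,4)] by simp
qed

lemma cong_finsum: assumes H: "ideal H R"
  shows "finite G \<Longrightarrow> f \<in> G \<rightarrow> carrier R \<Longrightarrow> f' \<in> G \<rightarrow> carrier R \<Longrightarrow> (\<forall>g\<in>G. f g \<ominus> f' g \<in> H)
    \<Longrightarrow> finsum R f G \<ominus> finsum R f' G \<in> H"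
proof (induction G rule: finite_induct)
  case empty then show ?case using cong_refl[OF H] by simp
next
  case (insert x F)
  have "finsum R f (insert x F) = f x \<oplus> finsum R f F" using insert by (intro finsum_insert) auto
  moreover have "finsum R f' (insert x F) = f' x \<oplus> finsum R f' F" using insert by (intro finsum_insert) auto
  moreover have "(f x \<oplus> finsum R f F) \<ominus> (f' x \<oplus> finsum R f' F) \<in> H"
    using insert by (intro cong_add[OF H]) (auto intro: finsum_closed)
  ultimately show ?case by simp
qed

lemma cong_rep: assumes "ideal H R" "a \<in> carrier R" shows "rep (H +> a) \<ominus> a \<in> H"
proof -
  obtain h where h: "h \<in> H" "rep (H +> a) = h \<oplus> a" using rep_coset(3)[OF assms] by blast
  have "h \<oplus> a \<ominus> a = h" using ideal_carr[OF assms(1) h(1)] assms(2) by algebra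
  then show ?thesis using h by simp
qed

lemma cong_mem: assumes "ideal H R" "x \<in> carrier R" "y \<in> carrier R" "x \<ominus> y \<in> H" "y \<in> H" shows "x \<in> H"
proof -
  have "x = (x \<ominus> y) \<oplus> y" using assms(2,3) by algebra
  then show ?thesis using ideal_add[OF assms(1,4,5)] by simp
qed

lemma cong_coset: assumes "ideal H R" "x \<in> carrier R" "y \<in> carrier R" "x \<ominus> y \<in> H" shows "H +> x = H +> y"
  using rcos_eq_iff[OF assms(1-3)] assms(4) by simp

lemma glc_ideal: assumes "finite S" "v \<in> S \<rightarrow> carrier R" "\<And>s. s \<in> S \<Longrightarrow> ideal (H s) R"
  shows "ideal (glc R S v H) R"
proof -
  have Hc: "\<And>s. s \<in> S \<Longrightarrow> H s \<subseteq> carrier R" using ideal_sub assms(3) by blast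
  have closed: "finsum R (\<lambda>s. h s \<otimes> v s) S \<in> carrier R" if "h \<in> Pi S H" for h
    using that Hc assms(2) by (intro finsum_closed) (auto simp: Pi_iff subset_iff)
  have lmul: "r \<otimes> x \<in> glc R S v H" if xin: "x \<in> glc R S v H" and rc: "r \<in> carrier R" for x r
  proof -
    obtain h where h: "h \<in> Pi S H" "x = finsum R (\<lambda>s. h s \<otimes> v s) S" using xin unfolding glc_def by blast
    have "r \<otimes> x = finsum R (\<lambda>s. r \<otimes> (h s \<otimes> v s)) S"
      unfolding h(2) using h(1) Hc assms(1,2) rc by (intro finsum_rdistr) (auto simp: Pi_iff subset_iff)
    also have "\<dots> = finsum R (\<lambda>s. (r \<otimes> h s) \<otimes> v s) S"
      using h(1) Hc assms(1,2) rc by (intro finsum_cong') (auto simp: m_assoc Pi_iff subset_iff)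
    finally have e: "r \<otimes> x = finsum R (\<lambda>s. (r \<otimes> h s) \<otimes> v s) S" .
    have hh: "(\<lambda>s. r \<otimes> h s) \<in> Pi S H" using h(1) rc ideal_lmult assms(3) by (auto simp: Pi_iff)
    show ?thesis unfolding glc_def e by (rule CollectI, rule exI[of _ "\<lambda>s. r \<otimes> h s"]) (simp add: hh)
  qed
  show ?thesis
  proof (rule idealI[OF ring_axioms])
    show "subgroup (glc R S v H) (add_monoid R)"
    proof (rule add.subgroupI)
      show "glc R S v H \<subseteq> carrier R" using closed unfolding glc_def by blast
      have "(\<lambda>s. \<zero>) \<in> Pi S H" using ideal_zero assms(3) by auto
      then show "glc R S v H \<noteq> {}" unfolding glc_def by blast
      show "\<ominus> a \<in> glc R S v H" if ain: "a \<in> glc R S v H" for a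
      proof -
        have ac: "a \<in> carrier R" using ain closed unfolding glc_def by blast
        have "(\<ominus> \<one>) \<otimes> a \<in> glc R S v H" using lmul ain by simp
        moreover have "(\<ominus> \<one>) \<otimes> a = \<ominus> a" using ac by (simp add: l_minus)
        ultimately show ?thesis by simp
      qed
      show "a \<oplus> b \<in> glc R S v H" if ain: "a \<in> glc R S v H" and bin: "b \<in> glc R S v H" for a b
      proof -
        obtain h where h: "h \<in> Pi S H" "a = finsum R (\<lambda>s. h s \<otimes> v s) S" using ain unfolding glc_def by blast
        obtain h' where h': "h' \<in> Pi S H" "b = finsum R (\<lambda>s. h' s \<otimes> v s) S" using bin unfolding glc_def by blast
        have "a \<oplus> b = finsum R (\<lambda>s. h s \<otimes> v s \<oplus> h' s \<otimes> v s) S"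
          unfolding h(2) h'(2) using h(1) h'(1) Hc assms(1,2) by (intro finsum_addf[symmetric]) (auto simp: Pi_iff subset_iff)
        also have "\<dots> = finsum R (\<lambda>s. (h s \<oplus> h' s) \<otimes> v s) S"
          using h(1) h'(1) Hc assms(1,2) by (intro finsum_cong') (auto simp: l_distr Pi_iff subset_iff)
        finally have e: "a \<oplus> b = finsum R (\<lambda>s. (h s \<oplus> h' s) \<otimes> v s) S" .
        have hh: "(\<lambda>s. h s \<oplus> h' s) \<in> Pi S H" using h(1) h'(1) ideal_add assms(3) by (auto simp: Pi_iff)
        show ?thesis unfolding glc_def e by (rule CollectI, rule exI[of _ "\<lambda>s. h s \<oplus> h' s"]) (simp add: hh)
      qed
    qed
    show "\<And>a x. a \<in> glc R S v H \<Longrightarrow> x \<in> carrier R \<Longrightarrow> x \<otimes> a \<in> glc R S v H" using lmul by blast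
    show "a \<otimes> x \<in> glc R S v H" if a: "a \<in> glc R S v H" and x: "x \<in> carrier R" for a x
    proof -
      have ac: "a \<in> carrier R" using a closed unfolding glc_def by blast
      show ?thesis using lmul[OF a x] m_comm[OF ac x] by simp
    qed
  qed
qed

lemma glc_smult: assumes "finite S" "v \<in> S \<rightarrow> carrier R" "h \<in> S \<rightarrow> carrier R" "r \<in> carrier R"
  shows "r \<otimes> finsum R (\<lambda>s. h s \<otimes> v s) S = finsum R (\<lambda>s. (r \<otimes> h s) \<otimes> v s) S"
proof -
  have "r \<otimes> finsum R (\<lambda>s. h s \<otimes> v s) S = finsum R (\<lambda>s. r \<otimes> (h s \<otimes> v s)) S"
    using assms by (intro finsum_rdistr) (auto simp: Pi_iff)
  also have "\<dots> = finsum R (\<lambda>s. (r \<otimes> h s) \<otimes> v s) S"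
    using assms by (intro finsum_cong') (auto simp: m_assoc Pi_iff)
  finally show ?thesis .
qed

lemma glc_single: assumes "finite S" "v \<in> S \<rightarrow> carrier R" "g \<in> S" "\<one> \<in> H g" "\<And>s. s \<in> S \<Longrightarrow> \<zero> \<in> H s"
  shows "v g \<in> glc R S v H"
proof -
  let ?h = "\<lambda>t. if g = t then \<one> else \<zero>"
  have "finsum R (\<lambda>t. ?h t \<otimes> v t) S = finsum R (\<lambda>t. if g = t then v t else \<zero>) S"
    using assms by (intro finsum_cong') (auto simp: Pi_iff)
  also have "\<dots> = v g" using finsum_singleton[OF assms(3,1,2)] .
  finally have e: "finsum R (\<lambda>t. ?h t \<otimes> v t) S = v g" .
  have hc: "?h \<in> Pi S H" using assms(4,5) by (auto simp: Pi_iff)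
  show ?thesis unfolding glc_def by (rule CollectI, rule exI[of _ ?h]) (use e hc in simp)
qed

lemma Kpow: assumes "ideal A R" "ideal J R" "ideal I R" "ideal K R" "A \<subseteq> I" "J \<subseteq> I" "K \<subseteq> A <+>\<^bsub>R\<^esub> J"
  shows "ideal_pow R K (Suc n) \<subseteq> A \<cdot> ideal_pow R I n <+>\<^bsub>R\<^esub> ideal_pow R J (Suc n)"
proof (induction n)
  case 0
  have "A \<cdot> ideal_pow R I 0 = A" using ideal_prod_one[OF assms(1)] by simp
  then show ?case using assms ideal_pow_1 by simp
next
  case (Suc n)
  let ?T = "\<lambda>n. A \<cdot> ideal_pow R I n <+>\<^bsub>R\<^esub> ideal_pow R J (Suc n)"
  have TI: "\<And>n. ideal (?T n) R"
    using assms by (intro add_ideals ideal_prod_is_ideal ideal_pow_ideal) auto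
  have AJI: "ideal (A <+>\<^bsub>R\<^esub> J) R" using add_ideals assms by blast
  have "ideal_pow R K (Suc (Suc n)) = ideal_pow R K (Suc n) \<cdot> K" by (simp add: ideal_pow_Suc)
  also have "\<dots> \<subseteq> ?T n \<cdot> (A <+>\<^bsub>R\<^esub> J)" using Suc TI AJI assms(7) by (intro prod_mono) auto
  also have "\<dots> \<subseteq> ?T (Suc n)"
  proof (rule prod_sub[OF TI])
    fix t k assume t: "t \<in> ?T n" and k: "k \<in> A <+>\<^bsub>R\<^esub> J"
    obtain p q where pq: "p \<in> A \<cdot> ideal_pow R I n" "q \<in> ideal_pow R J (Suc n)" "t = p \<oplus> q"
      using t sadd_mem by blast
    obtain \<alpha> \<beta> where ab: "\<alpha> \<in> A" "\<beta> \<in> J" "k = \<alpha> \<oplus> \<beta>" using k sadd_mem by blast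
    have AIn: "ideal (A \<cdot> ideal_pow R I (Suc n)) R" using assms by (intro ideal_prod_is_ideal ideal_pow_ideal) auto
    have Jn: "ideal (ideal_pow R J (Suc (Suc n))) R" using ideal_pow_ideal[OF assms(2)] .
    have pc: "p \<in> carrier R" using ideal_carr[OF ideal_prod_is_ideal[OF assms(1) ideal_pow_ideal[OF assms(3)]] pq(1)] .
    have qc: "q \<in> carrier R" using ideal_carr[OF ideal_pow_ideal[OF assms(2)] pq(2)] .
    have ac: "\<alpha> \<in> carrier R" using ideal_carr[OF assms(1) ab(1)] .
    have bc: "\<beta> \<in> carrier R" using ideal_carr[OF assms(2) ab(2)] .
    have I1: "\<And>y. y \<in> I \<Longrightarrow> y \<in> ideal_pow R I (Suc 0)" using ideal_pow_1[OF assms(3)] by simp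
    have 1: "p \<otimes> \<alpha> \<in> A \<cdot> ideal_pow R I (Suc n)"
      using mpow_mult1[OF assms(1,3) pq(1) I1, of \<alpha>] ab(1) assms(5) by auto
    have 2: "p \<otimes> \<beta> \<in> A \<cdot> ideal_pow R I (Suc n)"
      using mpow_mult1[OF assms(1,3) pq(1) I1, of \<beta>] ab(2) assms(6) by auto
    have qI: "q \<in> ideal_pow R I (Suc n)" using pq(2) pow_mono[OF assms(2,3,6)] by blast
    have 3: "q \<otimes> \<alpha> \<in> A \<cdot> ideal_pow R I (Suc n)"
      using prod_mem[OF ab(1) qI] m_comm[OF qc ac] by simp
    have 4: "q \<otimes> \<beta> \<in> ideal_pow R J (Suc (Suc n))"
      using prod_mem[OF pq(2) ab(2)] by (simp add: ideal_pow_Suc)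
    have "t \<otimes> k = (p \<otimes> \<alpha> \<oplus> p \<otimes> \<beta> \<oplus> q \<otimes> \<alpha>) \<oplus> q \<otimes> \<beta>"
      using pq(3) ab(3) pc qc ac bc by algebra
    moreover have "p \<otimes> \<alpha> \<oplus> p \<otimes> \<beta> \<oplus> q \<otimes> \<alpha> \<in> A \<cdot> ideal_pow R I (Suc n)"
      using 1 2 3 ideal_add[OF AIn] by simp
    ultimately show "t \<otimes> k \<in> ?T (Suc n)" using 4 sadd_mem by blast
  qed
  finally show ?case .
qed

lemma T_sub: assumes "ideal A R" "ideal J R" "ideal I R" "A \<subseteq> I" "J \<subseteq> I"
  shows "A \<cdot> ideal_pow R I n <+>\<^bsub>R\<^esub> ideal_pow R J (Suc n) \<subseteq> ideal_pow R I (Suc n)"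
proof (rule sadd_sub[OF ideal_pow_ideal[OF assms(3)]])
  have "A \<cdot> ideal_pow R I n \<subseteq> I \<cdot> ideal_pow R I n" using assms by (intro prod_mono ideal_pow_ideal) auto
  also have "\<dots> = ideal_pow R I (Suc n)"
    using ideal_prod_commute[OF assms(3) ideal_pow_ideal[OF assms(3)]] by (simp add: ideal_pow_Suc)
  finally show "A \<cdot> ideal_pow R I n \<subseteq> ideal_pow R I (Suc n)" .
  show "ideal_pow R J (Suc n) \<subseteq> ideal_pow R I (Suc n)" using pow_mono assms by blast
qed

end

context cring begin

lemma coker_to_eq:
  assumes mx: "maximalideal m R" and loc: "\<forall>M. maximalideal M R \<longrightarrow> M = m" and noe: "noetherian_ring R"
    and I: "ideal I R" and A: "ideal A R" and J: "ideal J R" and K: "ideal K R"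
    and AI: "A \<subseteq> I" and JI: "J \<subseteq> I" and KAJ: "K \<subseteq> A <+>\<^bsub>R\<^esub> J" and KI: "K \<subseteq> I"
    and cf: "coker_finite_over R m A K I"
  shows "\<exists>N. \<forall>n\<ge>N. ideal_pow R I n = A \<cdot> ideal_pow R I (n - 1) <+>\<^bsub>R\<^esub> ideal_pow R J n"
proof -
  have mI: "ideal m R" using maximalideal.axioms(1)[OF mx] .
  let ?FI = "special_fiber R m I"
  let ?D = "fib_den R m I"
  have DI: "\<And>n. ideal (?D n) R" using fd_ideal[OF mI I] .
  have IP: "\<And>n. ideal (ideal_pow R I n) R" using ideal_pow_ideal[OF I] .
  obtain G where G: "finite G" "G \<subseteq> carrier ?FI"
    and rp: "\<forall>z\<in>carrier ?FI. \<exists>y\<in>carrier (special_fiber R m K). \<exists>c\<in>G \<rightarrow> carrier (special_fiber R m A).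
            z = fib_map R m K I y \<oplus>\<^bsub>?FI\<^esub> (\<Oplus>\<^bsub>?FI\<^esub>g\<in>G. fib_map R m A I (c g) \<otimes>\<^bsub>?FI\<^esub> g)"
    using cf unfolding coker_finite_over_def Let_def by blast
  have "\<forall>g\<in>G. \<exists>N. \<forall>n\<ge>N. g n = ?D n" using G(2) sf_tail by blast
  then obtain Ng where Ng: "\<forall>g\<in>G. \<forall>n\<ge>Ng g. g n = ?D n" by metis
  define N where "N = Suc (\<Sum>g\<in>G. Ng g)"
  have gtail: "g n = ?D n" if "g \<in> G" "N \<le> n" for g n
  proof -
    have "Ng g \<le> (\<Sum>g\<in>G. Ng g)" by (rule member_le_sum) (use that G(1) in auto)
    then show ?thesis using Ng that N_def by simp
  qed
  show ?thesis
  proof (intro exI allI impI)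
    fix n assume n: "N \<le> n"
    then obtain n' where n': "n = Suc n'" using N_def by (cases n) auto
    define T where "T = A \<cdot> ideal_pow R I n' <+>\<^bsub>R\<^esub> ideal_pow R J n"
    have TI: "ideal T R" unfolding T_def using A J I IP by (intro add_ideals ideal_prod_is_ideal ideal_pow_ideal) auto
    define T' where "T' = T <+>\<^bsub>R\<^esub> ?D n"
    have T'I: "ideal T' R" unfolding T'_def using add_ideals[OF TI DI] .
    have TT': "T \<subseteq> T'" unfolding T'_def using sadd_left[OF TI DI] .
    have DT': "?D n \<subseteq> T'" unfolding T'_def using sadd_right[OF TI DI] .
    have KT: "ideal_pow R K n \<subseteq> T" using Kpow[OF A J I K AI JI KAJ, of n'] n' T_def by simp
    have AIT: "A \<cdot> ideal_pow R I n' \<subseteq> T" unfolding T_def using sadd_left A J IP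
      by (meson ideal_pow_ideal ideal_prod_is_ideal)
    have main: "ideal_pow R I n \<subseteq> T'"
    proof
      fix b assume b: "b \<in> ideal_pow R I n"
      have bc: "b \<in> carrier R" using ideal_carr[OF IP b] .
      define z where "z = (\<lambda>k. ?D k +> (if k = n then b else \<zero>))"
      have fin: "finite {k. (if k = n then b else \<zero>) \<noteq> \<zero>}"
        by (rule finite_subset[of _ "{n}"]) auto
      have zc: "z \<in> carrier ?FI" unfolding z_def
        by (rule sf_mk[OF mI I _ fin]) (auto simp: b ideal_zero[OF IP])
      obtain y c where y: "y \<in> carrier (special_fiber R m K)" and c: "c \<in> G \<rightarrow> carrier (special_fiber R m A)"
        and ze: "z = fib_map R m K I y \<oplus>\<^bsub>?FI\<^esub> (\<Oplus>\<^bsub>?FI\<^esub>g\<in>G. fib_map R m A I (c g) \<otimes>\<^bsub>?FI\<^esub> g)"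
        using rp zc by blast
      let ?psi = "\<lambda>g. fib_map R m A I (c g)"
      let ?S = "\<lambda>g. ?psi g \<otimes>\<^bsub>?FI\<^esub> g"
      have psic: "\<And>g. g \<in> G \<Longrightarrow> ?psi g \<in> carrier ?FI" using sf_map_closed[OF mI A I AI] c by blast
      have Sc: "?S \<in> G \<rightarrow> carrier ?FI" using sf_mult_closed[OF mI I] psic G(2) by blast
      have sumc: "finsum ?FI ?S G \<in> carrier ?FI"
        using abelian_monoid.finsum_closed[OF sf_abelian_monoid[OF mI I] Sc] .
      have phic: "fib_map R m K I y \<in> carrier ?FI" using sf_map_closed[OF mI K I KI y] .
      let ?X = "rep (fib_map R m K I y n) \<oplus> rep (finsum ?FI ?S G n)"
      have r1c: "rep (fib_map R m K I y n) \<in> carrier R" using sf_rep_carr[OF mI I phic] .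
      have r2c: "rep (finsum ?FI ?S G n) \<in> carrier R" using sf_rep_carr[OF mI I sumc] .
      have "?D n +> b = z n" by (simp add: z_def)
      also have "\<dots> = ?D n +> ?X" using ze sf_add_elem[OF mI I phic sumc] by simp
      finally have e: "?D n +> b = ?D n +> ?X" .
      have "b \<in> ?D n +> ?X" by (subst e[symmetric]) (rule rcos_self[OF DI bc])
      then obtain d where d: "d \<in> ?D n" "b = d \<oplus> ?X" using coset_mem by blast
      have r1: "rep (fib_map R m K I y n) \<in> T'"
      proof -
        have yc: "rep (y n) \<in> carrier R" using sf_rep_carr[OF mI K y] .
        obtain h where h: "h \<in> ?D n" "rep (?D n +> rep (y n)) = h \<oplus> rep (y n)"
          using rep_coset(3)[OF DI yc] by blast
        have "rep (y n) \<in> T'" using sf_elem(1)[OF mI K y] KT TT' by blast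
        then have "h \<oplus> rep (y n) \<in> T'" using h(1) DT' ideal_add[OF T'I] by blast
        then show ?thesis using h(2) by (simp add: fib_map_def)
      qed
      have trm: "rep (?psi g i) \<otimes> rep (g (n - i)) \<in> T'" if g: "g \<in> G" and i: "i \<in> {..n}" for g i
      proof (cases "i = 0")
        case True
        have "g n = ?D n" using gtail g n by blast
        then have "rep (g n) \<in> ?D n" using sf_rep_D[OF mI I] G(2) g by blast
        then have "rep (?psi g 0) \<otimes> rep (g n) \<in> ?D n"
          using ideal_lmult[OF DI] sf_rep_carr[OF mI I psic[OF g]] by blast
        then show ?thesis using True DT' by auto
      next
        case False
        have cgi: "rep (c g i) \<in> ideal_pow R A i" using sf_elem(1)[OF mI A] c g by blast
        have vc: "rep (c g i) \<in> carrier R" using ideal_carr[OF ideal_pow_ideal[OF A] cgi] .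
        obtain h where h: "h \<in> ?D i" "rep (?D i +> rep (c g i)) = h \<oplus> rep (c g i)"
          using rep_coset(3)[OF DI vc] by blast
        have psi_i: "rep (?psi g i) = h \<oplus> rep (c g i)" using h(2) by (simp add: fib_map_def)
        have w: "rep (g (n - i)) \<in> ideal_pow R I (n - i)" using sf_elem(1)[OF mI I] G(2) g by blast
        have wc: "rep (g (n - i)) \<in> carrier R" using ideal_carr[OF IP w] .
        have hc: "h \<in> carrier R" using ideal_carr[OF DI h(1)] .
        have i_le: "i \<le> n" using i by simp
        have "h \<otimes> rep (g (n - i)) \<in> m \<cdot> ideal_pow R I (i + (n - i))"
          using mpow_mult1[OF mI I _ w] h(1) unfolding fib_den_def by blast
        then have 1: "h \<otimes> rep (g (n - i)) \<in> T'" using i_le DT' unfolding fib_den_def by auto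
        obtain i' where i': "i = Suc i'" using False by (cases i) auto
        have "ideal_pow R A i = ideal_pow R A i' \<cdot> A" using i' by (simp add: ideal_pow_Suc)
        also have "\<dots> \<subseteq> ideal_pow R I i' \<cdot> A" using pow_mono[OF A I AI] A IP by (intro prod_mono) auto
        also have "\<dots> = A \<cdot> ideal_pow R I i'" using ideal_prod_commute[OF IP A] .
        finally have "rep (c g i) \<in> A \<cdot> ideal_pow R I i'" using cgi by blast
        then have "rep (c g i) \<otimes> rep (g (n - i)) \<in> A \<cdot> ideal_pow R I (i' + (n - i))"
          using mpow_mult1[OF A I _ w] by blast
        moreover have "i' + (n - i) = n'" using i' n' i_le by simp
        ultimately have 2: "rep (c g i) \<otimes> rep (g (n - i)) \<in> T'" using AIT TT' by auto
        have "rep (?psi g i) \<otimes> rep (g (n - i)) = h \<otimes> rep (g (n - i)) \<oplus> rep (c g i) \<otimes> rep (g (n - i))"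
          using psi_i hc vc wc by (simp add: l_distr)
        then show ?thesis using 1 2 ideal_add[OF T'I] by simp
      qed
      have Sg: "rep (?S g n) \<in> T'" if g: "g \<in> G" for g
      proof -
        let ?s = "\<Oplus>i\<in>{..n}. rep (?psi g i) \<otimes> rep (g (n - i))"
        have sT: "?s \<in> T'" using trm[OF g] by (intro ideal_finsum[OF T'I]) auto
        have sc: "?s \<in> carrier R" using ideal_carr[OF T'I sT] .
        obtain h where h: "h \<in> ?D n" "rep (?D n +> ?s) = h \<oplus> ?s" using rep_coset(3)[OF DI sc] by blast
        have "h \<oplus> ?s \<in> T'" using h(1) DT' sT ideal_add[OF T'I] by blast
        then show ?thesis using h(2) by (simp add: sf_mult)
      qed
      have r2: "rep (finsum ?FI ?S G n) \<in> T'"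
      proof -
        let ?s = "\<Oplus>g\<in>G. rep (?S g n)"
        have sT: "?s \<in> T'" using Sg by (intro ideal_finsum[OF T'I G(1)]) auto
        have sc: "?s \<in> carrier R" using ideal_carr[OF T'I sT] .
        obtain h where h: "h \<in> ?D n" "rep (?D n +> ?s) = h \<oplus> ?s" using rep_coset(3)[OF DI sc] by blast
        have "h \<oplus> ?s \<in> T'" using h(1) DT' sT ideal_add[OF T'I] by blast
        then show ?thesis using h(2) sf_finsum[OF mI I G(1) Sc, of n] by simp
      qed
      have "?X \<in> T'" using r1 r2 ideal_add[OF T'I] by blast
      then show "b \<in> T'" using d DT' ideal_add[OF T'I] by auto
    qed
    obtain S where S: "S \<subseteq> carrier R" "finite S" "ideal_pow R I n = Idl S"
      using noetherian_ring.finetely_gen[OF noe IP] by blast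
    have "Idl S \<subseteq> T <+>\<^bsub>R\<^esub> m \<cdot> (Idl S)" using main S(3) unfolding T'_def fib_den_def by simp
    then have "Idl S \<subseteq> T" using nakayama[OF mx loc TI S(2,1)] by blast
    moreover have "T \<subseteq> ideal_pow R I n" unfolding T_def n' using T_sub[OF A J I AI JI] .
    ultimately have "ideal_pow R I n = T" using S(3) by blast
    then show "ideal_pow R I n = A \<cdot> ideal_pow R I (n - 1) <+>\<^bsub>R\<^esub> ideal_pow R J n" using T_def n' by simp
  qed
qed

end

context cring begin

lemma sum_single_cong: assumes H: "ideal H R" and "finite X" "i0 \<in> X" "f \<in> X \<rightarrow> carrier R"
  "\<And>i. i \<in> X \<Longrightarrow> i \<noteq> i0 \<Longrightarrow> f i \<in> H"
  shows "finsum R f X \<ominus> f i0 \<in> H"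
proof -
  have X: "X = insert i0 (X - {i0})" using assms(3) by blast
  have r: "finsum R f (X - {i0}) \<in> H" using assms by (intro ideal_finsum[OF H]) auto
  have rc: "finsum R f (X - {i0}) \<in> carrier R" using ideal_carr[OF H r] .
  have fc: "f i0 \<in> carrier R" using assms(3,4) by blast
  have "finsum R f X = f i0 \<oplus> finsum R f (X - {i0})"
    by (subst X, rule finsum_insert) (use assms in auto)
  moreover have "f i0 \<oplus> finsum R f (X - {i0}) \<ominus> f i0 = finsum R f (X - {i0})" using rc fc by algebra
  ultimately show ?thesis using r by simp
qed

lemma add_minus_cancel: "x \<in> carrier R \<Longrightarrow> d \<in> carrier R \<Longrightarrow> (x \<oplus> d) \<ominus> x = d"
  by algebra

lemma eq_to_coker:
  assumes mI: "ideal m R" and noe: "noetherian_ring R"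
    and I: "ideal I R" and A: "ideal A R" and J: "ideal J R" and K: "ideal K R"
    and AI: "A \<subseteq> I" and AK: "A \<subseteq> K" and JK: "J \<subseteq> K" and KI: "K \<subseteq> I"
    and eq: "\<forall>n\<ge>N0. ideal_pow R I n = A \<cdot> ideal_pow R I (n - 1) <+>\<^bsub>R\<^esub> ideal_pow R J n"
  shows "coker_finite_over R m A K I"
proof -
  define N where "N = Suc N0"
  have eqN: "\<And>n. N \<le> n \<Longrightarrow> ideal_pow R I n = A \<cdot> ideal_pow R I (n - 1) <+>\<^bsub>R\<^esub> ideal_pow R J n"
    using eq N_def by auto
  let ?FI = "special_fiber R m I"
  let ?D = "fib_den R m I"
  have DI: "\<And>n. ideal (?D n) R" using fd_ideal[OF mI I] .
  have IP: "\<And>n. ideal (ideal_pow R I n) R" using ideal_pow_ideal[OF I] .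
  have AP: "\<And>n. ideal (ideal_pow R A n) R" using ideal_pow_ideal[OF A] .
  have KP: "\<And>n. ideal (ideal_pow R K n) R" using ideal_pow_ideal[OF K] .
  have "\<forall>d. \<exists>T. T \<subseteq> carrier R \<and> finite T \<and> ideal_pow R I d = Idl T"
    using noetherian_ring.finetely_gen[OF noe IP] by blast
  then obtain Tf where Tf: "\<And>d. Tf d \<subseteq> carrier R" "\<And>d. finite (Tf d)" "\<And>d. ideal_pow R I d = Idl (Tf d)"
    by metis
  have TfI: "\<And>d. Tf d \<subseteq> ideal_pow R I d" using genideal_self[OF Tf(1)] Tf(3) by auto
  define P where "P = Sigma {..<N} Tf"
  have finP: "finite P" unfolding P_def using Tf(2) by auto
  define e where "e = (\<lambda>p::nat \<times> 'a. (\<lambda>k. ?D k +> (if k = fst p then snd p else \<zero>)))"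
  have ec: "e p \<in> carrier ?FI" if p: "p \<in> P" for p
  proof -
    have fin: "finite {k. (if k = fst p then snd p else \<zero>) \<noteq> \<zero>}"
      by (rule finite_subset[of _ "{fst p}"]) auto
    have "snd p \<in> ideal_pow R I (fst p)" using p TfI unfolding P_def by force
    then show ?thesis unfolding e_def
      by (intro sf_mk[OF mI I _ fin]) (auto simp: ideal_zero[OF IP])
  qed
  have eoff: "e p k = ?D k" if "k \<noteq> fst p" for p k
    using that rcos_zero_iff[OF DI, of \<zero>] ideal_zero[OF DI] by (simp add: e_def)
  define G where "G = e ` P"
  have finG: "finite G" unfolding G_def using finP by simp
  have GC: "G \<subseteq> carrier ?FI" unfolding G_def using ec by blast
  define pg where "pg = (\<lambda>g. SOME p. p \<in> P \<and> g = e p)"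
  have pg: "pg g \<in> P \<and> g = e (pg g)" if "g \<in> G" for g
    unfolding pg_def by (rule someI_ex) (use that G_def in auto)
  define dg where "dg = (\<lambda>g. fst (pg g))"
  have dgN: "dg g < N" if "g \<in> G" for g using pg[OF that] unfolding dg_def P_def by auto
  have goff: "g k = ?D k" if "g \<in> G" "k \<noteq> dg g" for g k
    using pg[OF that(1)] eoff that(2) unfolding dg_def by metis
  define rg where "rg = (\<lambda>g. rep (g (dg g)))"
  have rgI: "rg g \<in> ideal_pow R I (dg g)" if "g \<in> G" for g
    unfolding rg_def using sf_elem(1)[OF mI I] GC that by blast
  have rgc: "rg \<in> G \<rightarrow> carrier R" using rgI ideal_carr[OF IP] by blast
  define Q where "Q = (\<lambda>n d. if d \<le> n then ideal_pow R A (n - d) else {\<zero>})"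
  have QI: "\<And>n d. ideal (Q n d) R" unfolding Q_def by (simp add: AP zeroideal)
  define M where "M = (\<lambda>n. glc R G rg (\<lambda>g. Q n (dg g)))"
  have MI: "\<And>n. ideal (M n) R" unfolding M_def by (rule glc_ideal[OF finG rgc QI])
  define Rp where "Rp = (\<lambda>n. (ideal_pow R K n <+>\<^bsub>R\<^esub> M n) <+>\<^bsub>R\<^esub> ?D n)"
  have KMI: "\<And>n. ideal (ideal_pow R K n <+>\<^bsub>R\<^esub> M n) R" using add_ideals[OF KP MI] .
  have RpI: "\<And>n. ideal (Rp n) R" unfolding Rp_def using add_ideals[OF KMI DI] .
  have KR: "\<And>n. ideal_pow R K n \<subseteq> Rp n" unfolding Rp_def
    using sadd_left[OF KP MI] sadd_left[OF KMI DI] by blast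
  have MR: "\<And>n. M n \<subseteq> Rp n" unfolding Rp_def
    using sadd_right[OF KP MI] sadd_left[OF KMI DI] by blast
  have DR: "\<And>n. ?D n \<subseteq> Rp n" unfolding Rp_def using sadd_right[OF KMI DI] by blast
  have key: "ideal_pow R I n \<subseteq> Rp n" for n
  proof (induction n rule: less_induct)
    case (less n)
    show ?case
    proof (cases "n < N")
      case True
      have "Tf n \<subseteq> Rp n"
      proof
        fix t assume t: "t \<in> Tf n"
        have tc: "t \<in> carrier R" using t Tf(1) by blast
        have pP: "(n, t) \<in> P" using True t P_def by auto
        have gG: "e (n, t) \<in> G" using pP G_def by blast
        show "t \<in> Rp n"
        proof (cases "t \<in> ?D n")
          case True then show ?thesis using DR by blast
        next
          case False
          have gn: "e (n, t) n = ?D n +> t" by (simp add: e_def)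
          have "e (n, t) n \<noteq> ?D n" using False rcos_zero_iff[OF DI tc] gn by simp
          then have dgn: "dg (e (n, t)) = n" using goff[OF gG, of n] by (metis)
          then have rgg: "rg (e (n, t)) = rep (?D n +> t)" using gn rg_def by simp
          obtain h where h: "h \<in> ?D n" "rep (?D n +> t) = h \<oplus> t" using rep_coset(3)[OF DI tc] by blast
          have hc: "h \<in> carrier R" using ideal_carr[OF DI h(1)] .
          have "rg (e (n, t)) \<in> M n" unfolding M_def
          proof (rule glc_single[OF finG rgc gG])
            show "\<one> \<in> Q n (dg (e (n, t)))" using dgn by (simp add: Q_def)
            show "\<And>s. s \<in> G \<Longrightarrow> \<zero> \<in> Q n (dg s)" using ideal_zero[OF QI] by blast
          qed
          then have 1: "h \<oplus> t \<in> Rp n" using MR rgg h(2) by auto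
          have 2: "\<ominus> h \<in> Rp n" using ideal_neg[OF DI h(1)] DR by blast
          have "t = \<ominus> h \<oplus> (h \<oplus> t)" using hc tc by algebra
          then show ?thesis using ideal_add[OF RpI 2 1] by simp
        qed
      qed
      then show ?thesis using Tf(3) genideal_minimal[OF RpI] by simp
    next
      case False
      then have nN: "N \<le> n" by simp
      then obtain n' where n': "n = Suc n'" using N_def by (cases n) auto
      have IH: "ideal_pow R I n' \<subseteq> Rp n'" using less n' by simp
      have eqn: "ideal_pow R I n = A \<cdot> ideal_pow R I n' <+>\<^bsub>R\<^esub> ideal_pow R J n" using eqN[OF nN] n' by simp
      have "ideal_pow R J n \<subseteq> ideal_pow R K n" using pow_mono[OF J K JK] .
      then have JR: "ideal_pow R J n \<subseteq> Rp n" using KR by blast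
      have AR: "A \<cdot> ideal_pow R I n' \<subseteq> Rp n"
      proof (rule prod_sub[OF RpI])
        fix a b assume a: "a \<in> A" and b: "b \<in> ideal_pow R I n'"
        have ac: "a \<in> carrier R" using ideal_carr[OF A a] .
        have "b \<in> Rp n'" using IH b by blast
        then obtain u \<delta> where ud: "u \<in> ideal_pow R K n' <+>\<^bsub>R\<^esub> M n'" "\<delta> \<in> ?D n'" "b = u \<oplus> \<delta>"
          unfolding Rp_def using sadd_mem by blast
        obtain k \<sigma> where ks: "k \<in> ideal_pow R K n'" "\<sigma> \<in> M n'" "u = k \<oplus> \<sigma>" using ud(1) sadd_mem by blast
        obtain \<alpha> where al: "\<alpha> \<in> Pi G (\<lambda>g. Q n' (dg g))" "\<sigma> = finsum R (\<lambda>g. \<alpha> g \<otimes> rg g) G"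
          using ks(2) unfolding M_def glc_def by blast
        have kc: "k \<in> carrier R" using ideal_carr[OF KP ks(1)] .
        have sc: "\<sigma> \<in> carrier R" using ideal_carr[OF MI ks(2)] .
        have dc: "\<delta> \<in> carrier R" using ideal_carr[OF DI ud(2)] .
        have alc: "\<alpha> \<in> G \<rightarrow> carrier R" using al(1) ideal_carr[OF QI] by (auto simp: Pi_iff)
        have "a \<otimes> b = (a \<otimes> k \<oplus> a \<otimes> \<sigma>) \<oplus> a \<otimes> \<delta>" using ud(3) ks(3) ac kc sc dc by algebra
        moreover have "a \<otimes> k \<in> Rp n"
        proof -
          have "k \<otimes> a \<in> ideal_pow R K n' \<cdot> K" using prod_mem[OF ks(1)] a AK by blast
          then have "a \<otimes> k \<in> ideal_pow R K n" using m_comm[OF kc ac] n' by (simp add: ideal_pow_Suc)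
          then show ?thesis using KR by blast
        qed
        moreover have "a \<otimes> \<sigma> \<in> Rp n"
        proof -
          have e1: "a \<otimes> \<sigma> = finsum R (\<lambda>g. (a \<otimes> \<alpha> g) \<otimes> rg g) G"
            using glc_smult[OF finG rgc alc ac] al(2) by simp
          have e2: "(\<lambda>g. a \<otimes> \<alpha> g) \<in> Pi G (\<lambda>g. Q n (dg g))"
          proof
            fix g assume g: "g \<in> G"
            have dle: "dg g \<le> n'" using dgN[OF g] nN n' by simp
            then have "\<alpha> g \<in> ideal_pow R A (n' - dg g)" using al(1) g by (auto simp: Q_def Pi_iff)
            then have "\<alpha> g \<otimes> a \<in> ideal_pow R A (Suc (n' - dg g))" using prod_mem a by (simp add: ideal_pow_Suc)
            moreover have "Suc (n' - dg g) = n - dg g" using dle n' by simp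
            moreover have "\<alpha> g \<otimes> a = a \<otimes> \<alpha> g" using m_comm alc g ac by blast
            ultimately show "a \<otimes> \<alpha> g \<in> Q n (dg g)" using dle n' by (simp add: Q_def)
          qed
          have "a \<otimes> \<sigma> \<in> M n" unfolding M_def glc_def
            by (rule CollectI, rule exI[of _ "\<lambda>g. a \<otimes> \<alpha> g"]) (use e1 e2 in simp)
          then show ?thesis using MR by blast
        qed
        moreover have "a \<otimes> \<delta> \<in> Rp n"
        proof -
          have aI1: "a \<in> ideal_pow R I (Suc 0)" using ideal_pow_1[OF I] a AI by auto
          have "\<delta> \<otimes> a \<in> m \<cdot> ideal_pow R I (n' + Suc 0)"
            using mpow_mult1[OF mI I _ aI1] ud(2) unfolding fib_den_def by blast
          then have "\<delta> \<otimes> a \<in> ?D n" using n' unfolding fib_den_def by simp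
          then show ?thesis using m_comm[OF dc ac] DR by auto
        qed
        ultimately show "a \<otimes> b \<in> Rp n" using ideal_add[OF RpI] by simp
      qed
      show ?thesis unfolding eqn using sadd_sub[OF RpI AR JR] .
    qed
  qed
  show ?thesis unfolding coker_finite_over_def Let_def
  proof (intro exI[of _ G] conjI ballI)
    show "finite G" by (rule finG)
    show "G \<subseteq> carrier ?FI" by (rule GC)
    fix z assume z: "z \<in> carrier ?FI"
    define C where "C = (\<lambda>n k \<alpha> \<delta>. k \<in> ideal_pow R K n \<and> \<alpha> \<in> Pi G (\<lambda>g. Q n (dg g)) \<and> \<delta> \<in> ?D n \<and>
        rep (z n) = (k \<oplus> finsum R (\<lambda>g. \<alpha> g \<otimes> rg g) G) \<oplus> \<delta> \<and>
        (z n = ?D n \<longrightarrow> k = \<zero> \<and> (\<forall>g\<in>G. \<alpha> g = \<zero>)))"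
    have decomp: "\<exists>k \<alpha> \<delta>. C n k \<alpha> \<delta>" for n
    proof (cases "z n = ?D n")
      case True
      have rD: "rep (z n) \<in> ?D n" using sf_rep_D[OF mI I z True] .
      have rc: "rep (z n) \<in> carrier R" using ideal_carr[OF DI rD] .
      have "finsum R (\<lambda>g. \<zero> \<otimes> rg g) G = finsum R (\<lambda>g. \<zero>) G"
        using rgc by (intro finsum_cong') (auto simp: Pi_iff)
      then have z0: "finsum R (\<lambda>g. \<zero> \<otimes> rg g) G = \<zero>" by simp
      have "(\<lambda>g. \<zero>) \<in> Pi G (\<lambda>g. Q n (dg g))" using ideal_zero[OF QI] by auto
      moreover have "rep (z n) = (\<zero> \<oplus> finsum R (\<lambda>g. \<zero> \<otimes> rg g) G) \<oplus> rep (z n)" using z0 rc by simp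
      ultimately show ?thesis unfolding C_def using rD ideal_zero[OF KP] True by blast
    next
      case False
      have "rep (z n) \<in> Rp n" using sf_elem(1)[OF mI I z] key by blast
      then obtain u \<delta> where ud: "u \<in> ideal_pow R K n <+>\<^bsub>R\<^esub> M n" "\<delta> \<in> ?D n" "rep (z n) = u \<oplus> \<delta>"
        unfolding Rp_def using sadd_mem by blast
      obtain k \<sigma> where ks: "k \<in> ideal_pow R K n" "\<sigma> \<in> M n" "u = k \<oplus> \<sigma>" using ud(1) sadd_mem by blast
      obtain \<alpha> where al: "\<alpha> \<in> Pi G (\<lambda>g. Q n (dg g))" "\<sigma> = finsum R (\<lambda>g. \<alpha> g \<otimes> rg g) G"
        using ks(2) unfolding M_def glc_def by blast
      show ?thesis unfolding C_def using ks(1) al ud(2,3) ks(3) False by blast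
    qed
    then obtain kk aa dd where W: "\<And>n. kk n \<in> ideal_pow R K n" "\<And>n. aa n \<in> Pi G (\<lambda>g. Q n (dg g))"
      "\<And>n. dd n \<in> ?D n" "\<And>n. rep (z n) = (kk n \<oplus> finsum R (\<lambda>g. aa n g \<otimes> rg g) G) \<oplus> dd n"
      "\<And>n. z n = ?D n \<Longrightarrow> kk n = \<zero> \<and> (\<forall>g\<in>G. aa n g = \<zero>)"
    proof -
      have "\<forall>n. \<exists>x. C n (fst x) (fst (snd x)) (snd (snd x))" using decomp by fastforce
      from choice[OF this] obtain W where Wp: "\<forall>n. C n (fst (W n)) (fst (snd (W n))) (snd (snd (W n)))" by blast
      show ?thesis
        by (rule that[of "\<lambda>n. fst (W n)" "\<lambda>n. fst (snd (W n))" "\<lambda>n. snd (snd (W n))"]) (use Wp in \<open>simp_all add: C_def\<close>)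
    qed
    define y where "y = (\<lambda>n. fib_den R m K n +> kk n)"
    have finz: "finite {n. z n \<noteq> ?D n}" using z by (simp add: sf_carrier)
    have kkc: "\<And>n. kk n \<in> carrier R" using W(1) ideal_carr[OF KP] by blast
    have yc: "y \<in> carrier (special_fiber R m K)" unfolding y_def
    proof (rule sf_mk[OF mI K W(1)])
      have "{n. kk n \<noteq> \<zero>} \<subseteq> {n. z n \<noteq> ?D n}" using W(5) by blast
      then show "finite {n. kk n \<noteq> \<zero>}" using finite_subset[OF _ finz] by blast
    qed
    define c where "c = (\<lambda>g i. fib_den R m A i +> aa (i + dg g) g)"
    have aamem: "aa (i + dg g) g \<in> ideal_pow R A i" if g: "g \<in> G" for g i
      using W(2)[of "i + dg g"] g by (auto simp: Q_def Pi_iff)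
    have aac: "aa n g \<in> carrier R" if g: "g \<in> G" for g n
      using W(2)[of n] g ideal_carr[OF QI] by (auto simp: Pi_iff)
    have cc: "c \<in> G \<rightarrow> carrier (special_fiber R m A)"
    proof
      fix g assume g: "g \<in> G"
      have "{i. aa (i + dg g) g \<noteq> \<zero>} \<subseteq> (\<lambda>i. i + dg g) -` {n. z n \<noteq> ?D n}" using W(5) g by auto
      moreover have "finite ((\<lambda>i. i + dg g) -` {n. z n \<noteq> ?D n})"
        by (rule finite_vimageI[OF finz]) (simp add: inj_on_def)
      ultimately have "finite {i. aa (i + dg g) g \<noteq> \<zero>}" using finite_subset by blast
      then show "c g \<in> carrier (special_fiber R m A)" unfolding c_def using sf_mk[OF mI A aamem[OF g]] by blast
    qed
    let ?psi = "\<lambda>g. fib_map R m A I (c g)"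
    let ?S = "\<lambda>g. ?psi g \<otimes>\<^bsub>?FI\<^esub> g"
    have psic: "\<And>g. g \<in> G \<Longrightarrow> ?psi g \<in> carrier ?FI" using sf_map_closed[OF mI A I AI] cc by blast
    have Sc: "?S \<in> G \<rightarrow> carrier ?FI" using sf_mult_closed[OF mI I] psic GC by blast
    have sumc: "finsum ?FI ?S G \<in> carrier ?FI"
      using abelian_monoid.finsum_closed[OF sf_abelian_monoid[OF mI I] Sc] .
    have phic: "fib_map R m K I y \<in> carrier ?FI" using sf_map_closed[OF mI K I KI yc] .
    have DKI: "\<And>n. fib_den R m K n \<subseteq> ?D n" unfolding fib_den_def
      using pow_mono[OF K I KI] mI IP by (intro prod_mono) auto
    have DAI: "\<And>n. fib_den R m A n \<subseteq> ?D n" unfolding fib_den_def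
      using pow_mono[OF A I AI] mI IP by (intro prod_mono) auto
    have zeq: "z = fib_map R m K I y \<oplus>\<^bsub>?FI\<^esub> (\<Oplus>\<^bsub>?FI\<^esub>g\<in>G. fib_map R m A I (c g) \<otimes>\<^bsub>?FI\<^esub> g)"
    proof
      fix n
      let ?H = "?D n"
      have HI: "ideal ?H R" by (rule DI)
      have rzc: "rep (z n) \<in> carrier R" using sf_rep_carr[OF mI I z] .
      have r1c: "rep (fib_map R m K I y n) \<in> carrier R" using sf_rep_carr[OF mI I phic] .
      have r2c: "rep (finsum ?FI ?S G n) \<in> carrier R" using sf_rep_carr[OF mI I sumc] .
      have ryc: "rep (y n) \<in> carrier R" using sf_rep_carr[OF mI K yc] .
      have sumac: "finsum R (\<lambda>g. aa n g \<otimes> rg g) G \<in> carrier R"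
        using aac rgc by (intro finsum_closed) (auto simp: Pi_iff)
      have c1: "rep (fib_map R m K I y n) \<ominus> kk n \<in> ?H"
      proof -
        have "rep (fib_map R m K I y n) \<ominus> rep (y n) \<in> ?H"
          using cong_rep[OF HI ryc] by (simp add: fib_map_def)
        moreover have "rep (y n) \<ominus> kk n \<in> ?H"
          using cong_rep[OF fd_ideal[OF mI K] kkc, of n] DKI by (auto simp: y_def)
        ultimately show ?thesis using cong_trans[OF HI r1c ryc kkc] by blast
      qed
      have c2: "rep (?S g n) \<ominus> aa n g \<otimes> rg g \<in> ?H" if g: "g \<in> G" for g
      proof -
        let ?f = "\<lambda>i. rep (?psi g i) \<otimes> rep (g (n - i))"
        let ?s = "\<Oplus>i\<in>{..n}. ?f i"
        have gc: "g \<in> carrier ?FI" using GC g by blast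
        have psc: "\<And>i. rep (?psi g i) \<in> carrier R" using sf_rep_carr[OF mI I psic[OF g]] .
        have grc: "\<And>j. rep (g j) \<in> carrier R" using sf_rep_carr[OF mI I gc] .
        have fc: "?f \<in> {..n} \<rightarrow> carrier R" using psc grc by auto
        have sc: "?s \<in> carrier R" using fc by (intro finsum_closed) auto
        have rSc: "rep (?S g n) \<in> carrier R" using sf_rep_carr[OF mI I] Sc g by blast
        have ac2: "aa n g \<otimes> rg g \<in> carrier R" using aac[OF g] rgc g by auto
        have s1: "rep (?S g n) \<ominus> ?s \<in> ?H" using cong_rep[OF HI sc] by (simp add: sf_mult)
        have off: "?f i \<in> ?H" if i: "i \<in> {..n}" "n - i \<noteq> dg g" for i
        proof -
          have "g (n - i) = ?D (n - i)" using goff[OF g i(2)] .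
          then have "rep (g (n - i)) \<in> m \<cdot> ideal_pow R I (n - i)"
            using sf_rep_D[OF mI I gc] unfolding fib_den_def by simp
          then have "?f i \<in> m \<cdot> ideal_pow R I (i + (n - i))"
            using mpow_mult2[OF mI I sf_elem(1)[OF mI I psic[OF g]]] by blast
          then show ?thesis using i(1) unfolding fib_den_def by simp
        qed
        have s2: "?s \<ominus> aa n g \<otimes> rg g \<in> ?H"
        proof (cases "dg g \<le> n")
          case True
          define i0 where "i0 = n - dg g"
          have i0n: "i0 \<in> {..n}" and ni0: "n - i0 = dg g" and i0d: "i0 + dg g = n" using True i0_def by auto
          have t1: "?s \<ominus> ?f i0 \<in> ?H"
          proof (rule sum_single_cong[OF HI _ i0n fc])
            show "finite {..n}" by simp
            fix i assume i: "i \<in> {..n}" "i \<noteq> i0"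
            then have "n - i \<noteq> dg g" using i0_def True by auto
            then show "?f i \<in> ?H" using off i(1) by blast
          qed
          have ci0c: "rep (c g i0) \<in> carrier R" using sf_rep_carr[OF mI A] cc g by blast
          have p1: "rep (?psi g i0) \<ominus> rep (c g i0) \<in> ?D i0"
            using cong_rep[OF DI ci0c] by (simp add: fib_map_def)
          have p2: "rep (c g i0) \<ominus> aa n g \<in> ?D i0"
            using cong_rep[OF fd_ideal[OF mI A] aac[OF g], of i0] DAI i0d by (auto simp: c_def)
          have p3: "rep (?psi g i0) \<ominus> aa n g \<in> m \<cdot> ideal_pow R I i0"
            using cong_trans[OF DI psc ci0c aac[OF g] p1 p2] unfolding fib_den_def .
          have "(rep (?psi g i0) \<ominus> aa n g) \<otimes> rg g \<in> m \<cdot> ideal_pow R I (i0 + dg g)"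
            using mpow_mult1[OF mI I p3 rgI[OF g]] .
          moreover have "(rep (?psi g i0) \<ominus> aa n g) \<otimes> rg g = ?f i0 \<ominus> aa n g \<otimes> rg g"
          proof -
            have rgg: "rg g \<in> carrier R" using rgc g by blast
            have "?f i0 = rep (?psi g i0) \<otimes> rg g" using ni0 unfolding rg_def by simp
            moreover have "(rep (?psi g i0) \<ominus> aa n g) \<otimes> rg g = rep (?psi g i0) \<otimes> rg g \<ominus> aa n g \<otimes> rg g"
              using psc[of i0] aac[OF g, of n] rgg by algebra
            ultimately show ?thesis by simp
          qed
          ultimately have t2: "?f i0 \<ominus> aa n g \<otimes> rg g \<in> ?H" using i0d unfolding fib_den_def by simp
          show ?thesis using cong_trans[OF HI sc _ ac2 t1 t2] fc i0n by blast
        next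
          case False
          have "?s \<in> ?H" using off False by (intro ideal_finsum[OF HI]) auto
          moreover have "aa n g = \<zero>" using W(2)[of n] g False by (auto simp: Q_def Pi_iff)
          ultimately show ?thesis using rgc g sc by (auto simp: Pi_iff a_minus_def)
        qed
        show ?thesis using cong_trans[OF HI rSc sc ac2 s1 s2] .
      qed
      have c3: "rep (finsum ?FI ?S G n) \<ominus> finsum R (\<lambda>g. aa n g \<otimes> rg g) G \<in> ?H"
      proof -
        let ?s = "\<Oplus>g\<in>G. rep (?S g n)"
        have rSc: "(\<lambda>g. rep (?S g n)) \<in> G \<rightarrow> carrier R" using sf_rep_carr[OF mI I] Sc by blast
        have sc: "?s \<in> carrier R" using rSc by (intro finsum_closed) auto
        have "rep (finsum ?FI ?S G n) \<ominus> ?s \<in> ?H"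
          using cong_rep[OF HI sc] sf_finsum[OF mI I finG Sc, of n] by simp
        moreover have "?s \<ominus> finsum R (\<lambda>g. aa n g \<otimes> rg g) G \<in> ?H"
          using c2 rSc aac rgc by (intro cong_finsum[OF HI finG]) (auto simp: Pi_iff)
        ultimately show ?thesis using cong_trans[OF HI r2c sc sumac] by blast
      qed
      have c4: "rep (z n) \<ominus> (kk n \<oplus> finsum R (\<lambda>g. aa n g \<otimes> rg g) G) \<in> ?H"
      proof -
        have ddc: "dd n \<in> carrier R" using ideal_carr[OF HI W(3)] .
        have Xc: "kk n \<oplus> finsum R (\<lambda>g. aa n g \<otimes> rg g) G \<in> carrier R" using kkc[of n] sumac by simp
        have "rep (z n) \<ominus> (kk n \<oplus> finsum R (\<lambda>g. aa n g \<otimes> rg g) G)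
           = ((kk n \<oplus> finsum R (\<lambda>g. aa n g \<otimes> rg g) G) \<oplus> dd n) \<ominus> (kk n \<oplus> finsum R (\<lambda>g. aa n g \<otimes> rg g) G)"
          using W(4)[of n] by simp
        also have "\<dots> = dd n" using add_minus_cancel[OF Xc ddc] .
        finally have "rep (z n) \<ominus> (kk n \<oplus> finsum R (\<lambda>g. aa n g \<otimes> rg g) G) = dd n" .
        then show ?thesis using W(3) by simp
      qed
      have c5: "(rep (fib_map R m K I y n) \<oplus> rep (finsum ?FI ?S G n)) \<ominus> (kk n \<oplus> finsum R (\<lambda>g. aa n g \<otimes> rg g) G) \<in> ?H"
        using cong_add[OF HI r1c r2c kkc sumac c1 c3] .
      have c6: "rep (z n) \<ominus> (rep (fib_map R m K I y n) \<oplus> rep (finsum ?FI ?S G n)) \<in> ?H"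
        using cong_trans[OF HI rzc _ _ c4 cong_sym[OF HI _ _ c5]] r1c r2c kkc sumac by blast
      have "z n = ?H +> rep (z n)" using sf_elem(2)[OF mI I z] .
      also have "\<dots> = ?H +> (rep (fib_map R m K I y n) \<oplus> rep (finsum ?FI ?S G n))"
        using cong_coset[OF HI rzc _ c6] r1c r2c by blast
      also have "\<dots> = (fib_map R m K I y \<oplus>\<^bsub>?FI\<^esub> finsum ?FI ?S G) n"
        using sf_add_elem[OF mI I phic sumc] by simp
      finally show "z n = (fib_map R m K I y \<oplus>\<^bsub>?FI\<^esub> (\<Oplus>\<^bsub>?FI\<^esub>g\<in>G. fib_map R m A I (c g) \<otimes>\<^bsub>?FI\<^esub> g)) n" .
    qed
    show "\<exists>y\<in>carrier (special_fiber R m K). \<exists>c\<in>G \<rightarrow> carrier (special_fiber R m A).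
            z = fib_map R m K I y \<oplus>\<^bsub>?FI\<^esub> (\<Oplus>\<^bsub>?FI\<^esub>g\<in>G. fib_map R m A I (c g) \<otimes>\<^bsub>?FI\<^esub> g)"
      using yc cc zeq by blast
  qed
qed

end


context cring begin
lemma Idl_prod: assumes "finite S" "S \<subseteq> carrier R" "ideal M R"
  shows "Idl (S \<cdot> M) = (Idl S) \<cdot> M"
proof
  have SMc: "S \<cdot> M \<subseteq> carrier R"
    by (rule prod_sub[OF oneideal]) (use assms(2) ideal_carr[OF assms(3)] in auto)
  have IM: "ideal ((Idl S) \<cdot> M) R" using ideal_prod_is_ideal[OF genideal_ideal[OF assms(2)] assms(3)] .
  show "Idl (S \<cdot> M) \<subseteq> (Idl S) \<cdot> M"
  proof (rule genideal_minimal[OF IM])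
    show "S \<cdot> M \<subseteq> (Idl S) \<cdot> M"
      by (rule prod_sub[OF IM]) (use genideal_self[OF assms(2)] prod_mem in blast)
  qed
  show "(Idl S) \<cdot> M \<subseteq> Idl (S \<cdot> M)"
  proof (rule prod_sub[OF genideal_ideal[OF SMc]])
    fix a b assume a: "a \<in> Idl S" and b: "b \<in> M"
    have bc: "b \<in> carrier R" using ideal_carr[OF assms(3) b] .
    obtain h where h: "h \<in> S \<rightarrow> carrier R" "a = finsum R (\<lambda>t. h t \<otimes> t) S"
      using a genideal_lcomb[OF assms(1,2)] unfolding lcomb_def by blast
    have "a \<otimes> b = finsum R (\<lambda>t. (h t \<otimes> t) \<otimes> b) S"
      unfolding h(2) using h(1) assms(1,2) bc by (intro finsum_ldistr) (auto simp: Pi_iff subset_iff)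
    also have "\<dots> = finsum R (\<lambda>t. t \<otimes> (h t \<otimes> b)) S"
      using h(1) assms(2) bc by (intro finsum_cong') (auto simp: Pi_iff subset_iff m_ac)
    finally have e: "a \<otimes> b = finsum R (\<lambda>t. t \<otimes> (h t \<otimes> b)) S" .
    have "finsum R (\<lambda>t. t \<otimes> (h t \<otimes> b)) S \<in> Idl (S \<cdot> M)"
    proof (rule ideal_finsum[OF genideal_ideal[OF SMc] assms(1)])
      fix t assume t: "t \<in> S"
      have "h t \<otimes> b \<in> M" using ideal_lmult[OF assms(3) b] h(1) t by blast
      then have "t \<otimes> (h t \<otimes> b) \<in> S \<cdot> M" using prod_mem t by blast
      then show "t \<otimes> (h t \<otimes> b) \<in> Idl (S \<cdot> M)" using genideal_self[OF SMc] by blast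
    qed
    then show "a \<otimes> b \<in> Idl (S \<cdot> M)" using e by simp
  qed
qed
end

theorem corollary2p6:
  fixes R :: "('a, 'b) ring_scheme" and m I :: "'a set" and f :: "nat \<Rightarrow> 'a" and l s :: nat
  assumes "noetherian_ring R" and "local_ring R m"
    and "ideal I R" and "analytic_spread R m I = enat l" and "1 \<le> l"
    and "f ` {1..l+s} \<subseteq> I"
  shows "(\<exists>N. \<forall>n\<ge>N. ideal_pow R I n =
            (Idl\<^bsub>R\<^esub> (f ` {1..l-1}) \<cdot>\<^bsub>R\<^esub> ideal_pow R I (n - 1))
              <+>\<^bsub>R\<^esub> ideal_pow R (Idl\<^bsub>R\<^esub> (f ` {l..l+s})) n)
         \<longleftrightarrow> coker_finite_over R m (Idl\<^bsub>R\<^esub> (f ` {1..l-1})) (Idl\<^bsub>R\<^esub> (f ` {1..l+s})) I"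
proof -
  have cr: "cring R" and mx: "maximalideal m R" and loc: "\<forall>M. maximalideal M R \<longrightarrow> M = m"
    using assms(2) unfolding local_ring_def by auto
  interpret cring R by (rule cr)
  have mI: "ideal m R" using maximalideal.axioms(1)[OF mx] .
  have I: "ideal I R" by (rule assms(3))
  define A where "A = Idl\<^bsub>R\<^esub> (f ` {1..l-1})"
  define J where "J = Idl\<^bsub>R\<^esub> (f ` {l..l+s})"
  define K where "K = Idl\<^bsub>R\<^esub> (f ` {1..l+s})"
  have Ic: "I \<subseteq> carrier R" using ideal_sub[OF I] .
  have gK: "f ` {1..l+s} \<subseteq> I" by (rule assms(6))
  have gA: "f ` {1..l-1} \<subseteq> f ` {1..l+s}" by auto
  have gJ: "f ` {l..l+s} \<subseteq> f ` {1..l+s}" using assms(5) by auto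
  have A: "ideal A R" unfolding A_def using gA gK Ic by (intro genideal_ideal) auto
  have J: "ideal J R" unfolding J_def using gJ gK Ic by (intro genideal_ideal) auto
  have K: "ideal K R" unfolding K_def using gK Ic by (intro genideal_ideal) auto
  have AI: "A \<subseteq> I" unfolding A_def using gA gK by (intro genideal_minimal[OF I]) auto
  have JI: "J \<subseteq> I" unfolding J_def using gJ gK by (intro genideal_minimal[OF I]) auto
  have KI: "K \<subseteq> I" unfolding K_def using gK by (intro genideal_minimal[OF I]) auto
  have gKK: "f ` {1..l+s} \<subseteq> K" unfolding K_def using gK Ic by (intro genideal_self) auto
  have AK: "A \<subseteq> K" unfolding A_def using gA gKK by (intro genideal_minimal[OF K]) auto
  have JK: "J \<subseteq> K" unfolding J_def using gJ gKK by (intro genideal_minimal[OF K]) auto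
  have AJ: "ideal (A <+>\<^bsub>R\<^esub> J) R" using add_ideals[OF A J] .
  have KAJ: "K \<subseteq> A <+>\<^bsub>R\<^esub> J" unfolding K_def
  proof (rule genideal_minimal[OF AJ])
    show "f ` {1..l+s} \<subseteq> A <+>\<^bsub>R\<^esub> J"
    proof
      fix x assume "x \<in> f ` {1..l+s}"
      then obtain i where i: "i \<in> {1..l+s}" "x = f i" by blast
      show "x \<in> A <+>\<^bsub>R\<^esub> J"
      proof (cases "i \<le> l - 1")
        case True
        then have "x \<in> f ` {1..l-1}" using i by auto
        then have "x \<in> A" unfolding A_def using gA gK Ic by (intro genideal_self[THEN subsetD]) auto
        then show ?thesis using sadd_left[OF A J] by blast
      next
        case False
        then have "x \<in> f ` {l..l+s}" using i by auto
        then have "x \<in> J" unfolding J_def using gJ gK Ic by (intro genideal_self[THEN subsetD]) auto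
        then show ?thesis using sadd_right[OF A J] by blast
      qed
    qed
  qed
  have main: "(\<exists>N. \<forall>n\<ge>N. ideal_pow R I n = A \<cdot>\<^bsub>R\<^esub> ideal_pow R I (n - 1) <+>\<^bsub>R\<^esub> ideal_pow R J n)
     \<longleftrightarrow> coker_finite_over R m A K I"
  proof
    assume "\<exists>N. \<forall>n\<ge>N. ideal_pow R I n = A \<cdot>\<^bsub>R\<^esub> ideal_pow R I (n - 1) <+>\<^bsub>R\<^esub> ideal_pow R J n"
    then obtain N0 where "\<forall>n\<ge>N0. ideal_pow R I n = A \<cdot>\<^bsub>R\<^esub> ideal_pow R I (n - 1) <+>\<^bsub>R\<^esub> ideal_pow R J n" by blast
    then show "coker_finite_over R m A K I" using eq_to_coker[OF mI assms(1) I A J K AI AK JK KI] by blast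
  next
    assume "coker_finite_over R m A K I"
    then show "\<exists>N. \<forall>n\<ge>N. ideal_pow R I n = A \<cdot>\<^bsub>R\<^esub> ideal_pow R I (n - 1) <+>\<^bsub>R\<^esub> ideal_pow R J n"
      using coker_to_eq[OF mx loc assms(1) I A J K AI JI KAJ KI] by blast
  qed
  have eqI: "\<And>n. Idl\<^bsub>R\<^esub> (f ` {1..l-1} \<cdot>\<^bsub>R\<^esub> ideal_pow R I (n - 1)) = A \<cdot>\<^bsub>R\<^esub> ideal_pow R I (n - 1)"
    unfolding A_def using gA gK Ic by (intro Idl_prod ideal_pow_ideal[OF I]) auto
  show ?thesis unfolding eqI using main unfolding A_def J_def K_def .
qed


end
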